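(* Let $\phi(x,y,z)=\alpha x+\beta y+\gamma z$ with $\alpha,\beta,\gamma\in\mathbb{R}$ not all zero, and let $S\subset\mathbb{R}^3$ be a cyclic surface which is $\phi$-minimal. Then the planes containing the circles (or arcs of circles) of the foliation of $S$ are parallel to one another.
   Context: For a smooth oriented surface $S\subset\mathbb{R}^3$ with unit normal (Gauss map) $N$, let $H$ denote its mean curvature, normalized so that the mean curvature vector is $\Delta_S X = 2HN$ ($X$ the position vector, $\Delta_S$ the Laplace–Beltrami operator); e.g. for a graph $z=u(x,y)$ with upward normal, $2H=\operatorname{div}\big(\nabla u/\sqrt{1+|\nabla u|^2}\big)$. For the density $e^{\phi}$ on $\mathbb{R}^3$ with $\phi(x,y,z)=\alpha x+\beta y+\gamma z$ (a log-linear density), the vector $\vec v=(\alpha,\beta,\gamma)$ is called the $\phi$-density vector, and the $\phi$-mean curvature is $H_\phi = H-\tfrac12\frac{d\phi}{dN}=H-\tfrac12\langle N,\vec v\rangle$. $S$ is $\phi$-minimal if $H_\phi\equiv 0$, i.e. $H=\tfrac12\langle N,\vec v\rangle$ on $S$ (this condition is independent of the choice of orientation). A cyclic surface is a surface generated by a smooth one-parameter family of circles (not necessarily of the same radius), or of arcs of circles; i.e. locally $X(s,t)=\mathbf c(s)+r(s)(\cos t\,\mathbf e_1(s)+\sin t\,\mathbf e_2(s))$ with $r>0$, $\{\mathbf e_1(s),\mathbf e_2(s)\}$ orthonormal spanning the plane of the $s$-th circle, $t$ in an interval. The result is local. *)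

theory Defs
  imports "HOL-Analysis.Analysis"
begin

definition smooth_on :: "real set \<Rightarrow> (real \<Rightarrow> 'a::real_normed_vector) \<Rightarrow> bool" where
  "smooth_on U f \<longleftrightarrow> (\<exists>D::nat \<Rightarrow> real \<Rightarrow> 'a. (\<forall>x\<in>U. D 0 x = f x) \<and>
      (\<forall>n. \<forall>x\<in>U. (D n has_vector_derivative D (Suc n) x) (at x)))"

definition cyclic_param ::
  "(real \<Rightarrow> real^3) \<Rightarrow> (real \<Rightarrow> real) \<Rightarrow> (real \<Rightarrow> real^3) \<Rightarrow> (real \<Rightarrow> real^3)
   \<Rightarrow> real \<Rightarrow> real \<Rightarrow> real^3" where
  "cyclic_param c r e1 e2 = (\<lambda>s t. c s + r s *\<^sub>R (cos t *\<^sub>R e1 s + sin t *\<^sub>R e2 s))"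

definition Xs :: "(real \<Rightarrow> real \<Rightarrow> real^3) \<Rightarrow> real \<Rightarrow> real \<Rightarrow> real^3" where
  "Xs X s t = vector_derivative (\<lambda>\<sigma>. X \<sigma> t) (at s)"
definition Xt :: "(real \<Rightarrow> real \<Rightarrow> real^3) \<Rightarrow> real \<Rightarrow> real \<Rightarrow> real^3" where
  "Xt X s t = vector_derivative (\<lambda>\<tau>. X s \<tau>) (at t)"

definition unit_normal :: "(real \<Rightarrow> real \<Rightarrow> real^3) \<Rightarrow> real \<Rightarrow> real \<Rightarrow> real^3" where
  "unit_normal X s t = (1 / norm (cross3 (Xs X s t) (Xt X s t))) *\<^sub>R (cross3 (Xs X s t) (Xt X s t))"

text \<open>Mean curvature H = (eG - 2fF + gE)/(2(EG - F^2)), normalised so that the mean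
  curvature vector is 2HN (Laplace-Beltrami of X equals 2HN).\<close>
definition mean_curv :: "(real \<Rightarrow> real \<Rightarrow> real^3) \<Rightarrow> real \<Rightarrow> real \<Rightarrow> real" where
  "mean_curv X s t =
    (let Xu = Xs X s t; Xv = Xt X s t;
         Xuu = Xs (Xs X) s t; Xuv = Xt (Xs X) s t; Xvv = Xt (Xt X) s t;
         N = unit_normal X s t;
         E = Xu \<bullet> Xu; F = Xu \<bullet> Xv; G = Xv \<bullet> Xv;
         e = Xuu \<bullet> N; f = Xuv \<bullet> N; g = Xvv \<bullet> N
     in (e * G - 2 * f * F + g * E) / (2 * (E * G - F\<^sup>2)))"

end

theory Submission
  imports Defs "HOL-Computational_Algebra.Polynomial"
begin


definition alphaC :: "real \<Rightarrow> real \<Rightarrow> real \<Rightarrow> real \<Rightarrow> real \<Rightarrow> real \<Rightarrow> real \<Rightarrow> real \<Rightarrow> real \<Rightarrow> real \<Rightarrow> real \<Rightarrow> real \<Rightarrow> real \<Rightarrow> real \<Rightarrow> real \<Rightarrow> real \<Rightarrow> real \<Rightarrow> real \<Rightarrow> nat \<Rightarrow> real" where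
  "alphaC r r1 r2 p q m p2 q2 m2 a b d x21 x1n x2n v1 v2 vn k = (if k = 0 then (r^2 * m^3 + r^2 * q^2 * m + r^2 * p^2 * m + r^2 * r1^2 * m - r^3 * r2 * m + r^3 * r1 * m2 - r^3 * r1 * m^2 * vn + 4 * r^3 * r1 * q * d + 2 * r^3 * r1 * q * m * v2 - 3 * r^3 * r1 * q^2 * vn - 2 * r^3 * r1 * p * b - r^3 * r1^3 * vn - r^4 * q2 * d + 4 * r^4 * m * d^2 + 3 * r^4 * m^2 * d * v2 + r^4 * q * x2n + 2 * r^4 * q * a * b - 2 * r^4 * q * m * d * vn + r^4 * q^2 * d * v2 + r^4 * r1^2 * d * v2 - r^5 * r1 * d^2 * vn + r^6 * d^3 * v2) else if k = 1 then (2 * r^2 * r1 * p * m - r^3 * m * p2 + 3 * r^3 * m^2 * b + r^3 * m^3 * v1 + 3 * r^3 * q^2 * b + r^3 * q^2 * m * v1 + r^3 * p * m2 - r^3 * p * m^2 * vn + 2 * r^3 * p * q * d + 2 * r^3 * p * q * m * v2 - 3 * r^3 * p * q^2 * vn - r^3 * p^2 * b + 3 * r^3 * r1^2 * b + r^3 * r1^2 * m * v1 - 3 * r^3 * r1^2 * p * vn - r^4 * r2 * b + r^4 * r1 * x1n - 2 * r^4 * r1 * a * d - 2 * r^4 * r1 * m * b * vn + 2 * r^4 * r1 * q * d * v1 + 2 * r^4 * r1 * q * b * v2 + 2 * r^4 * r1 * p * d * v2 + 6 * r^5 * b * d^2 + 3 * r^5 * m * d^2 * v1 + 6 * r^5 *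 m * b * d * v2 - 2 * r^5 * q * b * d * vn - r^5 * p * d^2 * vn) else if k = 2 then (0 - 6 * r^3 * r1 * q * d - 2 * r^3 * r1 * q * m * v2 + 3 * r^3 * r1 * q^2 * vn + 6 * r^3 * r1 * p * b + 2 * r^3 * r1 * p * m * v1 - 3 * r^3 * r1 * p^2 * vn + r^4 * q2 * d - r^4 * p2 * b - 4 * r^4 * m * d^2 + 4 * r^4 * m * b^2 - 3 * r^4 * m^2 * d * v2 + 3 * r^4 * m^2 * b * v1 - r^4 * q * x2n - 2 * r^4 * q * a * b + 2 * r^4 * q * m * d * vn - 2 * r^4 * q^2 * d * v2 + r^4 * q^2 * b * v1 + r^4 * p * x1n - 2 * r^4 * p * a * d - 2 * r^4 * p * m * b * vn + 2 * r^4 * p * q * d * v1 + 2 * r^4 * p * q * b * v2 + r^4 * p^2 * d * v2 - r^4 * r1^2 * d * v2 + r^4 * r1^2 * b * v1 + r^5 * r1 * d^2 * vn - r^5 * r1 * b^2 * vn - 2 * r^6 * d^3 * v2 + 3 * r^6 * b * d^2 * v1 + 3 * r^6 * b^2 * d * v2) else if k = 3 then (0 - 2 * r^3 * q^2 * b - r^3 * q^2 * m * v1 - 4 * r^3 * p * q * d - 2 * r^3 * p * q * m * v2 + 3 * r^3 * p * q^2 * vn + 2 * r^3 * p^2 * b + r^3 * p^2 * m * v1 - r^3 * p^3 * vn - 2 * r^4 * r1 * q * d * v1 - 2 * r^4 * r1 * q * b * v2 - 2 * r^4 * r1 * p * d * v2 + 2 * r^4 * r1 * p * b * v1 - 6 *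 r^5 * b * d^2 + 2 * r^5 * b^3 - 3 * r^5 * m * d^2 * v1 - 6 * r^5 * m * b * d * v2 + 3 * r^5 * m * b^2 * v1 + 2 * r^5 * q * b * d * vn + r^5 * p * d^2 * vn - r^5 * p * b^2 * vn) else if k = 4 then (r^4 * q^2 * d * v2 - r^4 * q^2 * b * v1 - 2 * r^4 * p * q * d * v1 - 2 * r^4 * p * q * b * v2 - r^4 * p^2 * d * v2 + r^4 * p^2 * b * v1 + r^6 * d^3 * v2 - 3 * r^6 * b * d^2 * v1 - 3 * r^6 * b^2 * d * v2 + r^6 * b^3 * v1) else 0)"
definition betaC :: "real \<Rightarrow> real \<Rightarrow> real \<Rightarrow> real \<Rightarrow> real \<Rightarrow> real \<Rightarrow> real \<Rightarrow> real \<Rightarrow> real \<Rightarrow> real \<Rightarrow> real \<Rightarrow> real \<Rightarrow> real \<Rightarrow> real \<Rightarrow> real \<Rightarrow> real \<Rightarrow> real \<Rightarrow> real \<Rightarrow> nat \<Rightarrow> real" where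
  "betaC r r1 r2 p q m p2 q2 m2 a b d x21 x1n x2n v1 v2 vn k = (if k = 0 then (2 * r^2 * r1 * q * m - r^3 * m * q2 + 3 * r^3 * m^2 * d + r^3 * m^3 * v2 + r^3 * q * m2 - r^3 * q * m^2 * vn + r^3 * q^2 * d + r^3 * q^2 * m * v2 - r^3 * q^3 * vn - 2 * r^3 * p * q * b + r^3 * p^2 * d + 3 * r^3 * r1^2 * d + r^3 * r1^2 * m * v2 - 3 * r^3 * r1^2 * q * vn - r^4 * r2 * d + r^4 * r1 * x2n + 2 * r^4 * r1 * a * b - 2 * r^4 * r1 * m * d * vn + 2 * r^4 * r1 * q * d * v2 + 2 * r^5 * d^3 + 3 * r^5 * m * d^2 * v2 - r^5 * q * d^2 * vn) else if k = 1 then (6 * r^3 * r1 * q * b + 2 * r^3 * r1 * q * m * v1 + 6 * r^3 * r1 * p * d + 2 * r^3 * r1 * p * m * v2 - 6 * r^3 * r1 * p * q * vn - r^4 * q2 * b - r^4 * p2 * d + 8 * r^4 * m * b * d + 3 * r^4 * m^2 * d * v1 + 3 * r^4 * m^2 * b * v2 + r^4 * q * x1n - 2 * r^4 * q * a * d - 2 * r^4 * q * m * b * vn + r^4 * q^2 * d * v1 + r^4 * q^2 * b * v2 + r^4 * p * x2n + 2 * r^4 * p * a * b - 2 * r^4 * p * m * d * vn + 2 * r^4 * p * q * d * v2 + r^4 * r1^2 * d * v1 + r^4 * r1^2 * b * v2 - 2 * r^5 * r1 * b * d * vn + r^6 * d^3 * v1 + 3 * r^6 * b * d^2 * v2) else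 if k = 2 then (0 - 2 * r^3 * q^2 * d - r^3 * q^2 * m * v2 + r^3 * q^3 * vn + 4 * r^3 * p * q * b + 2 * r^3 * p * q * m * v1 + 2 * r^3 * p^2 * d + r^3 * p^2 * m * v2 - 3 * r^3 * p^2 * q * vn - 2 * r^4 * r1 * q * d * v2 + 2 * r^4 * r1 * q * b * v1 + 2 * r^4 * r1 * p * d * v1 + 2 * r^4 * r1 * p * b * v2 - 2 * r^5 * d^3 + 6 * r^5 * b^2 * d - 3 * r^5 * m * d^2 * v2 + 6 * r^5 * m * b * d * v1 + 3 * r^5 * m * b^2 * v2 + r^5 * q * d^2 * vn - r^5 * q * b^2 * vn - 2 * r^5 * p * b * d * vn) else if k = 3 then (0 - r^4 * q^2 * d * v1 - r^4 * q^2 * b * v2 - 2 * r^4 * p * q * d * v2 + 2 * r^4 * p * q * b * v1 + r^4 * p^2 * d * v1 + r^4 * p^2 * b * v2 - r^6 * d^3 * v1 - 3 * r^6 * b * d^2 * v2 + 3 * r^6 * b^2 * d * v1 + r^6 * b^3 * v2) else 0)"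
lemma vec3_cross: "cross3 (vector [a1,a2,a3]) (vector [b1,b2,b3]) = (vector [a2*b3 - a3*b2, a3*b1 - a1*b3, a1*b2 - a2*b1] :: real^3)"
  by (simp add: cross3_simps)
lemma vec3_inner: "(vector [a1,a2,a3] :: real^3) \<bullet> vector [b1,b2,b3] = a1*b1 + a2*b2 + a3*b3"
  by (simp add: cross3_simps)

lemma phi_coeffs:
  fixes r r1 r2 p q m p2 q2 m2 a b d x21 x1n x2n v1 v2 vn c s :: real and KXt KXtt KXs KXst KXss W :: "real^3"
  assumes cs: "c^2 + s^2 = 1"
  assumes "KXt = (vector [- r * s, r * c, 0] :: real^3)"
    and "KXtt = (vector [- r * c, -r * s, 0] :: real^3)"
    and "KXs = (vector [p + r1 * c - r * a * s, q + r1 * s + r * a * c, m + r * (b * c + d * s)] :: real^3)"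
    and "KXst = (vector [- r1 * s - r * a * c, r1 * c - r * a * s, r * (d * c - b * s)] :: real^3)"
    and "KXss = (vector [p2 + r2 * c - 2 * r1 * a * s + r * ((0 - (a^2+b^2)) * c + s * x21),
                        q2 + r2 * s + 2 * r1 * a * c + r * ((0 - 2 * b * d - x21) * c + (0 - (a^2+d^2)) * s),
                        m2 + 2 * r1 * (b * c+d * s) + r * (c * x1n + s * x2n)] :: real^3)"
    and "W = cross3 KXs KXt"
  shows "(KXss \<bullet> W) * (KXt \<bullet> KXt) - 2 * (KXst \<bullet> W) * (KXs \<bullet> KXt) + (KXtt \<bullet> W) * (KXs \<bullet> KXs)
          - (W \<bullet> W) * (W \<bullet> vector [v1,v2,vn])
        = (\<Sum>k\<le>4. (alphaC r r1 r2 p q m p2 q2 m2 a b d x21 x1n x2n v1 v2 vn k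
                    + betaC r r1 r2 p q m p2 q2 m2 a b d x21 x1n x2n v1 v2 vn k * s) * c^k)"
proof -
  have "(KXss \<bullet> W) * (KXt \<bullet> KXt) - 2 * (KXst \<bullet> W) * (KXs \<bullet> KXt) + (KXtt \<bullet> W) * (KXs \<bullet> KXs)
          - (W \<bullet> W) * (W \<bullet> vector [v1,v2,vn])
        - (\<Sum>k\<le>4. (alphaC r r1 r2 p q m p2 q2 m2 a b d x21 x1n x2n v1 v2 vn k
                    + betaC r r1 r2 p q m p2 q2 m2 a b d x21 x1n x2n v1 v2 vn k * s) * c^k)
        = (c^2 + s^2 - 1) * (r^2 * m^3 + r^2 * q^2 * m + r^2 * p^2 * m + 2 * r^2 * r1 * q * m * s + 2 * r^2 * r1 * p * m * c + r^2 * r1^2 * m + r^2 * r1^2 * m * s^2 + r^2 * r1^2 * m * c^2 - r^3 * m * q2 * s - r^3 * m * p2 * c + 3 * r^3 * m^2 * d * s + 3 * r^3 * m^2 * b * c + r^3 * m^3 * v2 * s + r^3 * m^3 * v1 * c + r^3 * q * m2 * s - r^3 * q * m^2 * vn * s + r^3 * q^2 * d * s + 3 * r^3 * q^2 * b * c + r^3 * q^2 * m * v2 * s + r^3 * q^2 * m * v1 * c - r^3 * q^3 * vn * s + r^3 * p * m2 * c - r^3 * p * m^2 * vn * c + 2 * r^3 * p * q * d * c - 2 * r^3 * p * q * b * s + 2 * r^3 * p * q * m * v2 * c - 3 * r^3 * p * q^2 * vn * c + r^3 * p^2 * d * s - r^3 * p^2 * b * c - r^3 * r2 * m - r^3 *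 r2 * m * s^2 - r^3 * r2 * m * c^2 + r^3 * r1 * m2 + r^3 * r1 * m2 * s^2 + r^3 * r1 * m2 * c^2 - r^3 * r1 * m^2 * vn - r^3 * r1 * m^2 * vn * s^2 - r^3 * r1 * m^2 * vn * c^2 + 4 * r^3 * r1 * q * d + 4 * r^3 * r1 * q * d * s^2 - 2 * r^3 * r1 * q * d * c^2 + 6 * r^3 * r1 * q * b * c * s + 2 * r^3 * r1 * q * m * v2 + 2 * r^3 * r1 * q * m * v2 * s^2 + 2 * r^3 * r1 * q * m * v1 * c * s - 3 * r^3 * r1 * q^2 * vn - 3 * r^3 * r1 * q^2 * vn * s^2 + 6 * r^3 * r1 * p * d * c * s - 2 * r^3 * r1 * p * b - 2 * r^3 * r1 * p * b * s^2 + 4 * r^3 * r1 * p * b * c^2 + 2 * r^3 * r1 * p * m * v2 * c * s + 2 * r^3 * r1 * p * m * v1 * c^2 - 6 * r^3 * r1 * p * q * vn * c * s - 3 * r^3 * r1 * p^2 * vn * c^2 + 3 * r^3 * r1^2 * d * s + 3 * r^3 * r1^2 * d * s^3 + 3 * r^3 * r1^2 * d * c^2 * s + 3 * r^3 * r1^2 * b * c + 3 * r^3 * r1^2 * b * c * s^2 + 3 * r^3 * r1^2 * b * c^3 + r^3 * r1^2 * m * v2 * s + r^3 * r1^2 * m * v2 * s^3 + r^3 * r1^2 * m * v2 * c^2 * s + r^3 * r1^2 * m * v1 * c + r^3 * r1^2 * m * v1 * c * s^2 + r^3 * r1^2 * m * v1 * c^3 - 3 * r^3 * r1^2 * q * vn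 * s - 3 * r^3 * r1^2 * q * vn * s^3 - 3 * r^3 * r1^2 * q * vn * c^2 * s - 3 * r^3 * r1^2 * p * vn * c - 3 * r^3 * r1^2 * p * vn * c * s^2 - 3 * r^3 * r1^2 * p * vn * c^3 - r^3 * r1^3 * vn - r^3 * r1^3 * vn * s^2 - r^3 * r1^3 * vn * s^4 - r^3 * r1^3 * vn * c^2 - 2 * r^3 * r1^3 * vn * c^2 * s^2 - r^3 * r1^3 * vn * c^4 - r^4 * q2 * d - r^4 * q2 * d * s^2 - r^4 * q2 * b * c * s - r^4 * p2 * d * c * s - r^4 * p2 * b * c^2 + 4 * r^4 * m * d^2 + 4 * r^4 * m * d^2 * s^2 + 8 * r^4 * m * b * d * c * s + 4 * r^4 * m * b^2 * c^2 + 3 * r^4 * m^2 * d * v2 + 3 * r^4 * m^2 * d * v2 * s^2 + 3 * r^4 * m^2 * d * v1 * c * s + 3 * r^4 * m^2 * b * v2 * c * s + 3 * r^4 * m^2 * b * v1 * c^2 + r^4 * q * x2n + r^4 * q * x2n * s^2 + r^4 * q * x1n * c * s - 2 * r^4 * q * a * d * c * s + 2 * r^4 * q * a * b + 2 * r^4 * q * a * b * s^2 - 2 * r^4 * q * m * d * vn - 2 * r^4 * q * m * d * vn * s^2 - 2 * r^4 * q * m * b * vn * c * s + r^4 * q^2 * d * v2 + r^4 * q^2 * d * v2 * s^2 - r^4 * q^2 * d * v2 * c^2 + r^4 * q^2 * d * v1 * c * s + r^4 * q^2 * b * v2 * c * s + r^4 * q^2 * b * v1 * c^2 + r^4 * p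 * x2n * c * s + r^4 * p * x1n * c^2 - 2 * r^4 * p * a * d * c^2 + 2 * r^4 * p * a * b * c * s - 2 * r^4 * p * m * d * vn * c * s - 2 * r^4 * p * m * b * vn * c^2 + 2 * r^4 * p * q * d * v2 * c * s + 2 * r^4 * p * q * d * v1 * c^2 + 2 * r^4 * p * q * b * v2 * c^2 + r^4 * p^2 * d * v2 * c^2 - r^4 * r2 * d * s - r^4 * r2 * d * s^3 - r^4 * r2 * d * c^2 * s - r^4 * r2 * b * c - r^4 * r2 * b * c * s^2 - r^4 * r2 * b * c^3 + r^4 * r1 * x2n * s + r^4 * r1 * x2n * s^3 + r^4 * r1 * x2n * c^2 * s + r^4 * r1 * x1n * c + r^4 * r1 * x1n * c * s^2 + r^4 * r1 * x1n * c^3 - 2 * r^4 * r1 * a * d * c - 2 * r^4 * r1 * a * d * c * s^2 - 2 * r^4 * r1 * a * d * c^3 + 2 * r^4 * r1 * a * b * s + 2 * r^4 * r1 * a * b * s^3 + 2 * r^4 * r1 * a * b * c^2 * s - 2 * r^4 * r1 * m * d * vn * s - 2 * r^4 * r1 * m * d * vn * s^3 - 2 * r^4 * r1 * m * d * vn * c^2 * s - 2 * r^4 * r1 * m * b * vn * c - 2 * r^4 * r1 * m * b * vn * c * s^2 - 2 * r^4 * r1 * m * b * vn * c^3 + 2 * r^4 * r1 * q * d * v2 * s + 2 * r^4 * r1 * q * d * v2 * s^3 + 2 * r^4 * r1 * q * d * v1 * c + 2 * r^4 * r1 * q * d * v1 * c * s^2 + 2 * r^4 * r1 * q * b * v2 *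 c + 2 * r^4 * r1 * q * b * v2 * c * s^2 + 2 * r^4 * r1 * q * b * v1 * c^2 * s + 2 * r^4 * r1 * p * d * v2 * c + 2 * r^4 * r1 * p * d * v2 * c * s^2 + 2 * r^4 * r1 * p * d * v1 * c^2 * s + 2 * r^4 * r1 * p * b * v2 * c^2 * s + 2 * r^4 * r1 * p * b * v1 * c^3 + r^4 * r1^2 * d * v2 + r^4 * r1^2 * d * v2 * s^2 + r^4 * r1^2 * d * v2 * s^4 + r^4 * r1^2 * d * v2 * c^2 * s^2 + r^4 * r1^2 * d * v1 * c * s + r^4 * r1^2 * d * v1 * c * s^3 + r^4 * r1^2 * d * v1 * c^3 * s + r^4 * r1^2 * b * v2 * c * s + r^4 * r1^2 * b * v2 * c * s^3 + r^4 * r1^2 * b * v2 * c^3 * s + r^4 * r1^2 * b * v1 * c^2 + r^4 * r1^2 * b * v1 * c^2 * s^2 + r^4 * r1^2 * b * v1 * c^4 + 2 * r^5 * d^3 * s + 2 * r^5 * d^3 * s^3 + 6 * r^5 * b * d^2 * c + 6 * r^5 * b * d^2 * c * s^2 + 6 * r^5 * b^2 * d * c^2 * s + 2 * r^5 * b^3 * c^3 + 3 * r^5 * m * d^2 * v2 * s + 3 * r^5 * m * d^2 * v2 * s^3 + 3 * r^5 * m * d^2 * v1 * c + 3 * r^5 * m * d^2 * v1 * c * s^2 + 6 * r^5 * m * b * d * v2 * c + 6 * r^5 * m * b * d * v2 * c * s^2 + 6 * r^5 * m * b * d * v1 * c^2 * s + 3 * r^5 * m * b^2 * v2 * c^2 *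 s + 3 * r^5 * m * b^2 * v1 * c^3 - r^5 * q * d^2 * vn * s - r^5 * q * d^2 * vn * s^3 - 2 * r^5 * q * b * d * vn * c - 2 * r^5 * q * b * d * vn * c * s^2 - r^5 * q * b^2 * vn * c^2 * s - r^5 * p * d^2 * vn * c - r^5 * p * d^2 * vn * c * s^2 - 2 * r^5 * p * b * d * vn * c^2 * s - r^5 * p * b^2 * vn * c^3 - r^5 * r1 * d^2 * vn - r^5 * r1 * d^2 * vn * s^2 - r^5 * r1 * d^2 * vn * s^4 - r^5 * r1 * d^2 * vn * c^2 * s^2 - 2 * r^5 * r1 * b * d * vn * c * s - 2 * r^5 * r1 * b * d * vn * c * s^3 - 2 * r^5 * r1 * b * d * vn * c^3 * s - r^5 * r1 * b^2 * vn * c^2 - r^5 * r1 * b^2 * vn * c^2 * s^2 - r^5 * r1 * b^2 * vn * c^4 + r^6 * d^3 * v2 + r^6 * d^3 * v2 * s^2 + r^6 * d^3 * v2 * s^4 - r^6 * d^3 * v2 * c^2 + r^6 * d^3 * v1 * c * s + r^6 * d^3 * v1 * c * s^3 + 3 * r^6 * b * d^2 * v2 * c * s + 3 * r^6 * b * d^2 * v2 * c * s^3 + 3 * r^6 * b * d^2 * v1 * c^2 + 3 * r^6 * b * d^2 * v1 * c^2 * s^2 + 3 * r^6 * b^2 * d * v2 * c^2 + 3 * r^6 * b^2 * d * v2 * c^2 * s^2 + 3 * r^6 * b^2 * d * v1 * c^3 * s + r^6 * b^3 * v2 * c^3 * s + r^6 * b^3 * v1 * c^4)"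
    unfolding assms(2-) vec3_cross vec3_inner
    by (simp add: alphaC_def betaC_def numeral_eq_Suc atMost_Suc del: vector_3) algebra
  then show ?thesis using cs by simp
qed

lemma zfac: "(K::real) > 0 \<Longrightarrow> z * K = 0 \<Longrightarrow> z = 0" by simp
lemma zfac2: "(K::real) \<noteq> 0 \<Longrightarrow> K * z = 0 \<Longrightarrow> z = 0" by simp
lemma Lnz: "(b::real)^2 + d^2 > 0 \<Longrightarrow> b^2 + d^2 \<noteq> 0" by (metis less_irrefl)
lemma bd_nz: "(b::real)^2 + d^2 > 0 \<Longrightarrow> \<not> (b = 0 \<and> d = 0)" by auto

lemma alg_D4:
  fixes r r1 r2 p q m p2 q2 m2 a b d x21 x1n x2n v1 v2 vn :: real
  assumes r: "r > 0" and L: "b^2 + d^2 > 0" and V: "v1^2 + v2^2 > 0"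
    and A4: "alphaC r r1 r2 p q m p2 q2 m2 a b d x21 x1n x2n v1 v2 vn 4 = 0" and B3: "betaC r r1 r2 p q m p2 q2 m2 a b d x21 x1n x2n v1 v2 vn 3 = 0"
  shows "p * b + q * d = 0 \<and> p^2 + q^2 = r^2 * (b^2 + d^2)"
proof -
  define Zr where "Zr = p^2 - q^2 + r^2 * (b^2 - d^2)"
  define Zi where "Zi = - 2 * p * q - 2 * r^2 * b * d"
  define X where "X = b * v1 - d * v2"
  define Y where "Y = - (b * v2 + d * v1)"
  have "alphaC r r1 r2 p q m p2 q2 m2 a b d x21 x1n x2n v1 v2 vn 4 = r^4 * (Zr * X - Zi * Y)"
    unfolding alphaC_def Zr_def Zi_def X_def Y_def by simp algebra
  then have U: "Zr * X - Zi * Y = 0" using A4 r by simp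
  have "betaC r r1 r2 p q m p2 q2 m2 a b d x21 x1n x2n v1 v2 vn 3 = 0 - r^4 * (Zr * Y + Zi * X)"
    unfolding betaC_def Zr_def Zi_def X_def Y_def by simp algebra
  then have W: "Zr * Y + Zi * X = 0" using B3 r by simp
  have XY: "X^2 + Y^2 = (b^2 + d^2) * (v1^2 + v2^2)" unfolding X_def Y_def by algebra
  have XYp: "X^2 + Y^2 > 0" using XY L V by simp
  have "Zr * (X^2 + Y^2) = X * (Zr * X - Zi * Y) + Y * (Zr * Y + Zi * X)" by algebra
  also have "\<dots> = 0" unfolding U W by simp
  finally have Zr0: "Zr = 0" by (rule zfac[OF XYp])
  have "Zi * (X^2 + Y^2) = X * (Zr * Y + Zi * X) - Y * (Zr * X - Zi * Y)" by algebra
  also have "\<dots> = 0" unfolding U W by simp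
  finally have Zi0: "Zi = 0" by (rule zfac[OF XYp])
  define x where "x = p * b + q * d"
  define y where "y = p * d - q * b"
  have e1: "x^2 - y^2 = 0 - r^2 * (b^2 + d^2)^2 + Zr * (b^2 - d^2) - Zi * (b * d) * 2"
    unfolding x_def y_def Zr_def Zi_def by algebra
  have e2: "x * y = Zr * b * d + Zi * (b^2 - d^2) / 2"
    unfolding x_def y_def Zr_def Zi_def by algebra
  have xy: "x * y = 0" using e2 Zr0 Zi0 by simp
  have x2: "x^2 - y^2 = 0 - r^2 * (b^2 + d^2)^2" using e1 Zr0 Zi0 by simp
  have x0: "x = 0"
  proof (rule ccontr)
    assume "x \<noteq> 0"
    then have "y = 0" using xy by simp
    then have "x^2 = 0 - r^2 * (b^2 + d^2)^2" using x2 by simp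
    moreover have "x^2 > 0" using \<open>x \<noteq> 0\<close> by simp
    moreover have "r^2 * (b^2 + d^2)^2 \<ge> 0" by simp
    ultimately show False by linarith
  qed
  have "(p^2 + q^2) * (b^2 + d^2) = x^2 + y^2" unfolding x_def y_def by algebra
  also have "\<dots> = r^2 * (b^2 + d^2)^2" using x2 x0 by simp
  finally have "(p^2 + q^2) * (b^2 + d^2) = (r^2 * (b^2 + d^2)) * (b^2 + d^2)" by (simp only: power2_eq_square mult_ac)
  then have "p^2 + q^2 = r^2 * (b^2 + d^2)" using Lnz[OF L] by (metis mult_right_cancel)
  then show ?thesis using x0 x_def by simp
qed

lemma alg_eps:
  fixes r p q b d :: real
  assumes r: "r > 0" and L: "b^2 + d^2 > 0"
    and h1: "p * b + q * d = 0" and h2: "p^2 + q^2 = r^2 * (b^2 + d^2)"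
  obtains e where "e^2 = 1" "p = e * r * d" "q = - e * r * b"
proof -
  define y where "y = p * d - q * b"
  define K where "K = r * (b^2 + d^2)"
  define e where "e = y / K"
  have rL: "K > 0" unfolding K_def using r L by simp
  have eK: "e * K = y" unfolding e_def using rL by simp
  have "(p^2 + q^2) * (b^2 + d^2) = (p * b + q * d)^2 + y^2" unfolding y_def by algebra
  then have "y^2 = (p^2 + q^2) * (b^2 + d^2)" using h1 by simp
  then have "y^2 = K^2" using h2 unfolding K_def by (simp add: power2_eq_square)
  then have "e^2 * K^2 = 1 * K^2" using eK by (metis power_mult_distrib mult_1)
  then have e1: "e^2 = 1" using rL by simp
  have "p * (b^2 + d^2) = (p * b + q * d) * b + y * d" unfolding y_def by algebra
  then have pL: "p * (b^2 + d^2) = y * d" using h1 by simp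
  have "p * K = (e * r * d) * K" using pL eK unfolding K_def by algebra
  then have e2: "p = e * r * d" using rL by simp
  have "q * (b^2 + d^2) = (p * b + q * d) * d - y * b" unfolding y_def by algebra
  then have qL: "q * (b^2 + d^2) = - y * b" using h1 by simp
  have "q * K = (- e * r * b) * K" using qL eK unfolding K_def by algebra
  then have e3: "q = - e * r * b" using rL by (metis less_irrefl mult_right_cancel)
  show ?thesis using that e1 e2 e3 by blast
qed

lemma alg_D3:
  fixes r r1 r2 p q m p2 q2 m2 a b d x21 x1n x2n v1 v2 vn e :: real
  assumes r: "r > 0" and L: "b^2 + d^2 > 0" and V: "v1^2 + v2^2 > 0"
    and e: "e^2 = 1" "p = e * r * d" "q = - e * r * b"
    and A3: "alphaC r r1 r2 p q m p2 q2 m2 a b d x21 x1n x2n v1 v2 vn 3 = 0" and B2: "betaC r r1 r2 p q m p2 q2 m2 a b d x21 x1n x2n v1 v2 vn 2 = 0"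
  shows "m = 0 \<and> r1 = 0"
proof -
  define G1 where "G1 = b^2 * v1 - d^2 * v1 - 2 * b * d * v2"
  define G2 where "G2 = b^2 * v2 - d^2 * v2 + 2 * b * d * v1"
  have "alphaC r r1 r2 p q m p2 q2 m2 a b d x21 x1n x2n v1 v2 vn 3 = 2 * r^5 * (m * G1 + e * r1 * G2)"
    unfolding alphaC_def G1_def G2_def e(2,3) using e(1) by simp algebra
  then have U: "m * G1 + e * r1 * G2 = 0" using A3 r by simp
  have "betaC r r1 r2 p q m p2 q2 m2 a b d x21 x1n x2n v1 v2 vn 2 = 2 * r^5 * (m * G2 - e * r1 * G1)"
    unfolding betaC_def G1_def G2_def e(2,3) using e(1) by simp algebra
  then have W: "m * G2 - e * r1 * G1 = 0" using B2 r by simp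
  have GG: "G1^2 + G2^2 = (b^2 + d^2)^2 * (v1^2 + v2^2)" unfolding G1_def G2_def by algebra
  have "(b^2 + d^2)^2 > 0" by (rule zero_less_power[OF L])
  then have GGp: "G1^2 + G2^2 > 0" unfolding GG using V by (rule mult_pos_pos)
  have "m * (G1^2 + G2^2) = G1 * (m * G1 + e * r1 * G2) + G2 * (m * G2 - e * r1 * G1)" by algebra
  also have "\<dots> = 0" unfolding U W by simp
  finally have "m = 0" by (rule zfac[OF GGp])
  have "e * r1 * (G1^2 + G2^2) = G2 * (m * G1 + e * r1 * G2) - G1 * (m * G2 - e * r1 * G1)" by algebra
  also have "\<dots> = 0" unfolding U W by simp
  finally have "e * r1 = 0" by (rule zfac[OF GGp])
  moreover have "e \<noteq> 0" using e(1) by auto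
  ultimately show ?thesis using \<open>m = 0\<close> by simp
qed

lemma alg_D2:
  fixes r r1 r2 p q m p2 q2 m2 a b d x21 x1n x2n v1 v2 vn e :: real
  assumes r: "r > 0" and L: "b^2 + d^2 > 0"
    and e: "e^2 = 1" "p = e * r * d" "q = - e * r * b" and m: "m = 0" and r1: "r1 = 0"
    and A2: "alphaC r r1 r2 p q m p2 q2 m2 a b d x21 x1n x2n v1 v2 vn 2 = 0" and B1: "betaC r r1 r2 p q m p2 q2 m2 a b d x21 x1n x2n v1 v2 vn 1 = 0"
    and F1: "(p2 + a * q + b * m) * b + p * (x1n - a * d) + (q2 - a * p + d * m) * d + q * (x2n + a * b) = 0"
    and F2: "2 * p * (p2 + a * q + b * m) + 2 * q * (q2 - a * p + d * m) - 2 * r * r1 * (b^2 + d^2)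
             - r^2 * (2 * b * (x1n - a * d) + 2 * d * (x2n + a * b)) = 0"
  shows "v1 = 0 \<and> v2 = 0"
proof -
  define F1v where "F1v = (p2 + a * q + b * m) * b + p * (x1n - a * d) + (q2 - a * p + d * m) * d + q * (x2n + a * b)"
  define F2v where "F2v = 2 * p * (p2 + a * q + b * m) + 2 * q * (q2 - a * p + d * m) - 2 * r * r1 * (b^2 + d^2)
             - r^2 * (2 * b * (x1n - a * d) + 2 * d * (x2n + a * b))"
  have "(b^2 + d^2) * alphaC r r1 r2 p q m p2 q2 m2 a b d x21 x1n x2n v1 v2 vn 2 = r^4 * (d^2 - b^2) * F1v - e * r^3 * b * d * F2v + r^6 * (b^2 + d^2)^2 * (b * v1 - d * v2)"
    unfolding alphaC_def F1v_def F2v_def e(2,3) m r1 using e(1) by simp algebra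
  then have "r^6 * (b^2 + d^2)^2 * (b * v1 - d * v2) = 0" using A2 F1 F2 unfolding F1v_def[symmetric] F2v_def[symmetric] by simp
  moreover have "r^6 * (b^2 + d^2)^2 \<noteq> 0" using r bd_nz[OF L] by simp
  ultimately have X: "b * v1 - d * v2 = 0" using zfac2 by blast
  have "(b^2 + d^2) * betaC r r1 r2 p q m p2 q2 m2 a b d x21 x1n x2n v1 v2 vn 1 = - 2 * b * d * r^4 * F1v + e * r^3 * (b^2 - d^2) / 2 * F2v + r^6 * (b^2 + d^2)^2 * (d * v1 + b * v2)"
    unfolding betaC_def F1v_def F2v_def e(2,3) m r1 using e(1) by simp algebra
  then have "r^6 * (b^2 + d^2)^2 * (d * v1 + b * v2) = 0" using B1 F1 F2 unfolding F1v_def[symmetric] F2v_def[symmetric] by simp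
  moreover have "r^6 * (b^2 + d^2)^2 \<noteq> 0" using r bd_nz[OF L] by simp
  ultimately have Y: "d * v1 + b * v2 = 0" using zfac2 by blast
  have "(b^2 + d^2) * v1 = b * (b * v1 - d * v2) + d * (d * v1 + b * v2)" by algebra
  also have "\<dots> = 0" unfolding X Y by simp
  finally have "v1 = 0" using bd_nz[OF L] by simp
  have "(b^2 + d^2) * v2 = b * (d * v1 + b * v2) - d * (b * v1 - d * v2)" by algebra
  also have "\<dots> = 0" unfolding X Y by simp
  finally have "v2 = 0" using bd_nz[OF L] by simp
  show ?thesis using \<open>v1 = 0\<close> \<open>v2 = 0\<close> by simp
qed


lemma deriv_const_zero:
  fixes f :: "real \<Rightarrow> real"
  assumes "open U" "x \<in> U" "\<forall>y\<in>U. f y = k" "(f has_real_derivative D) (at x)"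
  shows "D = 0"
proof -
  have "((\<lambda>y. k) has_real_derivative 0) (at x)" by simp
  then have "(f has_real_derivative 0) (at x)"
    by (rule has_field_derivative_transform_within_open[OF _ assms(1,2)]) (use assms(3) in auto)
  then show ?thesis using assms(4) DERIV_unique by blast
qed

lemma poly_sum_monom: fixes A :: "nat \<Rightarrow> real" shows "poly (\<Sum>k\<le>n. monom (A k) k) x = (\<Sum>k\<le>n. A k * x^k)"
  by (simp add: poly_sum poly_monom)

lemma coeff_sum_monom_le: fixes A :: "nat \<Rightarrow> real" shows "k \<le> n \<Longrightarrow> coeff (\<Sum>j\<le>n. monom (A j) j) k = A k"
  by (simp add: coeff_sum coeff_monom)

lemma trig_poly_zero:
  fixes A B :: "nat \<Rightarrow> real" and J :: "real set"
  assumes J: "open J" "J \<noteq> {}"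
    and h: "\<forall>t\<in>J. (\<Sum>k\<le>n. (A k + B k * sin t) * cos t ^ k) = 0"
  shows "\<forall>k\<le>n. A k = 0 \<and> B k = 0"
proof -
  define fA where "fA = (\<Sum>k\<le>n. monom (A k) k)"
  define fB where "fB = (\<Sum>k\<le>n. monom (B k) k)"
  have h2: "poly fA (cos t) = - sin t * poly fB (cos t)" if "t \<in> J" for t
  proof -
    have "(\<Sum>k\<le>n. (A k + B k * sin t) * cos t ^ k)
       = (\<Sum>k\<le>n. A k * cos t ^ k) + sin t * (\<Sum>k\<le>n. B k * cos t ^ k)"
      by (simp add: sum.distrib sum_distrib_left algebra_simps)
    then show ?thesis using h that unfolding fA_def fB_def poly_sum_monom by simp
  qed
  define g where "g = fA * fA - [:1,0,-1:] * fB * fB"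
  have pg: "poly g x = (poly fA x)^2 - (1 - x^2) * (poly fB x)^2" for x
    by (simp add: g_def power2_eq_square algebra_simps)
  have gz: "poly g (cos t) = 0" if "t \<in> J" for t
  proof -
    have "(poly fA (cos t))^2 = (sin t)^2 * (poly fB (cos t))^2"
      using h2[OF that] by (simp add: power_mult_distrib)
    also have "(sin t)^2 = 1 - (cos t)^2" by (simp add: sin_squared_eq)
    finally show ?thesis by (simp add: pg)
  qed
  have g0: "g = 0"
  proof (rule ccontr)
    assume "g \<noteq> 0"
    then have fin: "finite {x. poly g x = 0}" by (rule poly_roots_finite)
    obtain t0 where t0: "t0 \<in> J" using J by blast
    obtain e where e: "e > 0" "ball t0 e \<subseteq> J" using J t0 open_contains_ball by blast
    have "cos ` ball t0 e \<subseteq> {x. poly g x = 0}" using gz e by auto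
    then have "finite (cos ` ball t0 e)" using fin finite_subset by blast
    moreover have "connected (cos ` ball t0 e)"
      by (intro connected_continuous_image continuous_intros) auto
    ultimately have "cos ` ball t0 e = {} \<or> (\<exists>a. cos ` ball t0 e = {a})"
      using connected_finite_iff_sing by blast
    moreover have "t0 \<in> ball t0 e" using e by simp
    ultimately have cc: "\<forall>y\<in>ball t0 e. cos y = cos t0"
      by (metis (mono_tags, lifting) empty_iff image_eqI singletonD)
    have sz: "\<forall>y\<in>ball t0 e. sin y = 0"
    proof
      fix y assume y: "y \<in> ball t0 e"
      have "- sin y = 0"
        by (rule deriv_const_zero[OF open_ball y cc]) (rule DERIV_cos)
      then show "sin y = 0" by simp
    qed
    have "cos t0 = 0"
      by (rule deriv_const_zero[OF open_ball \<open>t0 \<in> ball t0 e\<close> sz]) (rule DERIV_sin)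
    moreover have "sin t0 = 0" using sz \<open>t0 \<in> ball t0 e\<close> by blast
    ultimately show False using sin_cos_squared_add[of t0] by simp
  qed
  have pz: "poly fA x = 0 \<and> poly fB x = 0" if "x > 1" for x
  proof -
    have eq: "(poly fA x)^2 = (1 - x^2) * (poly fB x)^2" using pg[of x] g0 by simp
    have "1 - x^2 < 0" using that by (simp add: power2_eq_square) (smt (verit) mult_le_cancel_left1)
    moreover have "(poly fA x)^2 \<ge> 0" "(poly fB x)^2 \<ge> 0" by simp_all
    ultimately have "(poly fB x)^2 = 0"
      using eq by (smt (verit) mult_neg_pos zero_le_power2 mult_nonpos_nonneg)
    then show ?thesis using eq by simp
  qed
  have inf: "infinite {x::real. x > 1}"
    using infinite_Ioi[of 1] by (simp add: greaterThan_def)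
  have "fA = 0"
  proof (rule ccontr)
    assume "fA \<noteq> 0"
    then have "finite {x. poly fA x = 0}" by (rule poly_roots_finite)
    moreover have "{x::real. x > 1} \<subseteq> {x. poly fA x = 0}" using pz by auto
    ultimately show False using inf finite_subset by blast
  qed
  moreover have "fB = 0"
  proof (rule ccontr)
    assume "fB \<noteq> 0"
    then have "finite {x. poly fB x = 0}" by (rule poly_roots_finite)
    moreover have "{x::real. x > 1} \<subseteq> {x. poly fB x = 0}" using pz by auto
    ultimately show False using inf finite_subset by blast
  qed
  ultimately show ?thesis
    using coeff_sum_monom_le[of _ n A] coeff_sum_monom_le[of _ n B] unfolding fA_def fB_def by auto
qed


lemma cross_cross_expand: "cross3 x (cross3 y z) = (x \<bullet> z) *\<^sub>R y - (x \<bullet> y) *\<^sub>R z"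
  for x y z :: "real^3"
  by (simp add: cross3_simps forall_3)

lemma frame:
  fixes e1 e2 :: "real^3"
  assumes n1: "norm e1 = 1" and n2: "norm e2 = 1" and o: "e1 \<bullet> e2 = 0"
  shows "\<And>x y. (vector [e1 \<bullet> x, e2 \<bullet> x, cross3 e1 e2 \<bullet> x] :: real^3) \<bullet> vector [e1 \<bullet> y, e2 \<bullet> y, cross3 e1 e2 \<bullet> y] = x \<bullet> y"
    and "\<And>x y. vector [e1 \<bullet> cross3 x y, e2 \<bullet> cross3 x y, cross3 e1 e2 \<bullet> cross3 x y]
           = cross3 (vector [e1 \<bullet> x, e2 \<bullet> x, cross3 e1 e2 \<bullet> x]) (vector [e1 \<bullet> y, e2 \<bullet> y, cross3 e1 e2 \<bullet> y])"
proof -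
  define n where "n = cross3 e1 e2"
  define A where "A = (vector [e1, e2, n] :: real^3^3)"
  have e11: "e1 \<bullet> e1 = 1" using n1 by (simp add: dot_square_norm)
  have e22: "e2 \<bullet> e2 = 1" using n2 by (simp add: dot_square_norm)
  have ne1: "n \<bullet> e1 = 0" "n \<bullet> e2 = 0" unfolding n_def by (simp_all add: dot_cross_self)
  have nn: "n \<bullet> n = 1"
  proof -
    have "(norm n)^2 + (e1 \<bullet> e2)^2 = (norm e1 * norm e2)^2" unfolding n_def by (rule norm_cross_dot)
    then show ?thesis using n1 n2 o by (simp add: dot_square_norm)
  qed
  have Av: "A *v x = vector [e1 \<bullet> x, e2 \<bullet> x, n \<bullet> x]" for x
    unfolding A_def by (simp add: vec_eq_iff forall_3 matrix_vector_mult_def inner_vec_def sum_3)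
  have ent: "(A ** transpose A) $ i $ j = (A $ i) \<bullet> (A $ j)" for i j
    by (simp add: matrix_matrix_mult_def transpose_def inner_vec_def mult.commute)
  have AAt: "A ** transpose A = mat 1"
    using e11 e22 o ne1 nn unfolding vec_eq_iff forall_3 ent
    by (simp add: mat_def A_def inner_commute)
  then have AtA: "transpose A ** A = mat 1" using matrix_left_right_inverse by blast
  have dot: "(A *v x) \<bullet> (A *v y) = x \<bullet> y" for x y
  proof -
    have "(A *v x) \<bullet> (A *v y) = (x v* transpose A) \<bullet> (A *v y)" by simp
    also have "\<dots> = x \<bullet> (transpose A *v (A *v y))" by (rule dot_lmul_matrix)
    also have "\<dots> = x \<bullet> y" by (simp only: matrix_vector_mul_assoc AtA matrix_vector_mul_lid)
    finally show ?thesis .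
  qed
  have detA: "det A = 1"
  proof -
    have "det A = e1 \<bullet> cross3 e2 n" unfolding A_def by (simp add: dot_cross_det)
    also have "cross3 e2 n = e1" unfolding n_def cross_cross_expand using e22 o by (simp add: inner_commute)
    finally show ?thesis using e11 by simp
  qed
  have cr: "A *v cross3 x y = cross3 (A *v x) (A *v y)" for x y
  proof -
    have "transpose A *v cross3 (A *v x) (A *v y) = det A *\<^sub>R cross3 x y" by (rule cross_matrix_mult)
    then have "A *v (transpose A *v cross3 (A *v x) (A *v y)) = A *v cross3 x y" using detA by simp
    then show ?thesis by (simp only: matrix_vector_mul_assoc AAt matrix_vector_mul_lid)
  qed
  show "\<And>x y. (vector [e1 \<bullet> x, e2 \<bullet> x, cross3 e1 e2 \<bullet> x] :: real^3) \<bullet> vector [e1 \<bullet> y, e2 \<bullet> y, cross3 e1 e2 \<bullet> y] = x \<bullet> y"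
    using dot unfolding Av n_def by blast
  show "\<And>x y. vector [e1 \<bullet> cross3 x y, e2 \<bullet> cross3 x y, cross3 e1 e2 \<bullet> cross3 x y]
           = cross3 (vector [e1 \<bullet> x, e2 \<bullet> x, cross3 e1 e2 \<bullet> x]) (vector [e1 \<bullet> y, e2 \<bullet> y, cross3 e1 e2 \<bullet> y])"
    using cr unfolding Av n_def by blast
qed

lemma mc_lemma:
  fixes Xu Xv Xuu Xuv Xvv vv N :: "real^3"
  assumes W: "cross3 Xu Xv \<noteq> 0"
    and N: "N = (1 / norm (cross3 Xu Xv)) *\<^sub>R cross3 Xu Xv"
    and H: "((Xuu \<bullet> N) * (Xv \<bullet> Xv) - 2 * (Xuv \<bullet> N) * (Xu \<bullet> Xv) + (Xvv \<bullet> N) * (Xu \<bullet> Xu))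
             / (2 * ((Xu \<bullet> Xu) * (Xv \<bullet> Xv) - (Xu \<bullet> Xv)^2)) = 1/2 * (N \<bullet> vv)"
  shows "(Xuu \<bullet> cross3 Xu Xv) * (Xv \<bullet> Xv) - 2 * (Xuv \<bullet> cross3 Xu Xv) * (Xu \<bullet> Xv)
         + (Xvv \<bullet> cross3 Xu Xv) * (Xu \<bullet> Xu)
         - (cross3 Xu Xv \<bullet> cross3 Xu Xv) * (cross3 Xu Xv \<bullet> vv) = 0"
proof -
  define Wv where "Wv = cross3 Xu Xv"
  define w where "w = norm Wv"
  have wpos: "w > 0" using W unfolding w_def Wv_def by simp
  have EG: "(Xu \<bullet> Xu) * (Xv \<bullet> Xv) - (Xu \<bullet> Xv)^2 = w^2"
  proof -
    have "(norm Wv)^2 + (Xu \<bullet> Xv)^2 = (norm Xu * norm Xv)^2" unfolding Wv_def by (rule norm_cross_dot)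
    then show ?thesis unfolding w_def by (simp add: dot_square_norm power_mult_distrib)
  qed
  have WW: "Wv \<bullet> Wv = w^2" unfolding w_def by (simp add: dot_square_norm)
  define A where "A = (Xuu \<bullet> Wv) * (Xv \<bullet> Xv) - 2 * (Xuv \<bullet> Wv) * (Xu \<bullet> Xv) + (Xvv \<bullet> Wv) * (Xu \<bullet> Xu)"
  have "((Xuu \<bullet> N) * (Xv \<bullet> Xv) - 2 * (Xuv \<bullet> N) * (Xu \<bullet> Xv) + (Xvv \<bullet> N) * (Xu \<bullet> Xu)) = A / w"
    unfolding N A_def Wv_def[symmetric] w_def[symmetric] using wpos by (simp add: field_simps)
  then have "A / w / (2 * w^2) = 1/2 * ((Wv \<bullet> vv) / w)" using H unfolding EG N Wv_def[symmetric] w_def[symmetric] by simp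
  then have "A = w^2 * (Wv \<bullet> vv)" using wpos by (simp add: field_simps power2_eq_square)
  then show ?thesis unfolding A_def WW[symmetric] Wv_def by simp
qed

lemma deriv_inner:
  fixes f g :: "real \<Rightarrow> real^3"
  assumes "(f has_vector_derivative f') (at x)" "(g has_vector_derivative g') (at x)"
  shows "((\<lambda>s. f s \<bullet> g s) has_real_derivative (f x \<bullet> g' + f' \<bullet> g x)) (at x)"
  unfolding has_real_derivative_iff_has_vector_derivative
  by (rule bounded_bilinear.has_vector_derivative[OF bounded_bilinear_inner assms])

lemma bb_cross: "bounded_bilinear (cross3 :: real^3 \<Rightarrow> real^3 \<Rightarrow> real^3)"
  using bilinear_cross bilinear_conv_bounded_bilinear by blast

lemma deriv_cross:
  fixes f g :: "real \<Rightarrow> real^3"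
  assumes "(f has_vector_derivative f') (at x)" "(g has_vector_derivative g') (at x)"
  shows "((\<lambda>s. cross3 (f s) (g s)) has_vector_derivative (cross3 (f x) g' + cross3 f' (g x))) (at x)"
  by (rule bounded_bilinear.has_vector_derivative[OF bb_cross assms])

lemma deriv_comb:
  fixes c f g :: "real \<Rightarrow> real^3" and r :: "real \<Rightarrow> real"
  assumes "(c has_vector_derivative c') (at s)" "(r has_vector_derivative r') (at s)"
    "(f has_vector_derivative f') (at s)" "(g has_vector_derivative g') (at s)"
  shows "((\<lambda>\<sigma>. c \<sigma> + r \<sigma> *\<^sub>R (\<alpha> *\<^sub>R f \<sigma> + \<beta> *\<^sub>R g \<sigma>)) has_vector_derivative
           (c' + r' *\<^sub>R (\<alpha> *\<^sub>R f s + \<beta> *\<^sub>R g s) + r s *\<^sub>R (\<alpha> *\<^sub>R f' + \<beta> *\<^sub>R g'))) (at s)"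
proof -
  have r: "(r has_real_derivative r') (at s)" using assms(2) by (simp add: has_real_derivative_iff_has_vector_derivative)
  have fg: "((\<lambda>\<sigma>. \<alpha> *\<^sub>R f \<sigma> + \<beta> *\<^sub>R g \<sigma>) has_vector_derivative (\<alpha> *\<^sub>R f' + \<beta> *\<^sub>R g')) (at s)"
    by (intro has_vector_derivative_add has_vector_derivative_scaleR[where f="\<lambda>_. \<alpha>" and f'=0, simplified]
        has_vector_derivative_scaleR[where f="\<lambda>_. \<beta>" and f'=0, simplified] assms(3,4))
  have "((\<lambda>\<sigma>. r \<sigma> *\<^sub>R (\<alpha> *\<^sub>R f \<sigma> + \<beta> *\<^sub>R g \<sigma>)) has_vector_derivative
          (r s *\<^sub>R (\<alpha> *\<^sub>R f' + \<beta> *\<^sub>R g') + r' *\<^sub>R (\<alpha> *\<^sub>R f s + \<beta> *\<^sub>R g s))) (at s)"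
    by (rule has_vector_derivative_scaleR[OF r fg])
  from has_vector_derivative_add[OF assms(1) this] show ?thesis by (simp add: algebra_simps)
qed

lemma deriv_t:
  fixes C A B :: "real^3"
  shows "((\<lambda>\<tau>. C + \<rho> *\<^sub>R (cos \<tau> *\<^sub>R A + sin \<tau> *\<^sub>R B)) has_vector_derivative
           \<rho> *\<^sub>R (cos t *\<^sub>R B + sin t *\<^sub>R (- A))) (at t)"
proof -
  have "((\<lambda>\<tau>. C + \<rho> *\<^sub>R (cos \<tau> *\<^sub>R A + sin \<tau> *\<^sub>R B)) has_vector_derivative
           0 + \<rho> *\<^sub>R ((- sin t) *\<^sub>R A + cos t *\<^sub>R B)) (at t)"
    by (intro has_vector_derivative_add has_vector_derivative_const
        has_vector_derivative_scaleR[where f="\<lambda>_. \<rho>" and f'=0, simplified]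
        has_vector_derivative_scaleR[where g="\<lambda>_. A" and g'=0, simplified]
        has_vector_derivative_scaleR[where g="\<lambda>_. B" and g'=0, simplified] DERIV_cos DERIV_sin)
  then show ?thesis by (simp add: algebra_simps)
qed

lemma smooth_on_D2:
  fixes f :: "real \<Rightarrow> 'a::real_normed_vector"
  assumes "smooth_on U f" "open U"
  obtains f1 f2 where "\<forall>x\<in>U. (f has_vector_derivative f1 x) (at x)"
    "\<forall>x\<in>U. (f1 has_vector_derivative f2 x) (at x)"
proof -
  obtain D where D0: "\<forall>x\<in>U. D 0 x = f x" and D: "\<forall>n. \<forall>x\<in>U. (D n has_vector_derivative D (Suc n) x) (at x)"
    using assms(1) unfolding smooth_on_def by blast
  have "\<forall>x\<in>U. (f has_vector_derivative D 1 x) (at x)"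
  proof
    fix x assume x: "x \<in> U"
    have "(D 0 has_vector_derivative D 1 x) (at x)" using D x by (metis One_nat_def)
    then show "(f has_vector_derivative D 1 x) (at x)"
      by (rule has_vector_derivative_transform_within_open[OF _ assms(2) x]) (use D0 in auto)
  qed
  moreover have "\<forall>x\<in>U. (D 1 has_vector_derivative D 2 x) (at x)" using D by (metis Suc_1 One_nat_def)
  ultimately show ?thesis using that by blast
qed


lemma v3_add: "(vector [a1,a2,a3] :: real^3) + vector [b1,b2,b3] = vector [a1+b1, a2+b2, a3+b3]"
  by (simp add: vec_eq_iff forall_3)
lemma v3_scale: "k *\<^sub>R (vector [a1,a2,a3] :: real^3) = vector [k*a1, k*a2, k*a3]"
  by (simp add: vec_eq_iff forall_3)
lemma v3_neg: "- (vector [a1,a2,a3] :: real^3) = vector [-a1, -a2, -a3]"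
  by (simp add: vec_eq_iff forall_3)
lemma v3_eq: "(vector [a1,a2,a3] :: real^3) = vector [b1,b2,b3] \<longleftrightarrow> a1 = b1 \<and> a2 = b2 \<and> a3 = b3"
  by (simp add: vec_eq_iff forall_3)
lemma v3_zero: "(vector [a1,a2,a3] :: real^3) = 0 \<longleftrightarrow> a1 = 0 \<and> a2 = 0 \<and> a3 = 0"
  by (simp add: vec_eq_iff forall_3)


theorem theorem1:
  fixes \<alpha> \<beta> \<gamma> :: real
    and c e1 e2 :: "real \<Rightarrow> real^3" and r :: "real \<Rightarrow> real"
    and I J :: "real set"
  assumes not_all_zero: "\<alpha> \<noteq> 0 \<or> \<beta> \<noteq> 0 \<or> \<gamma> \<noteq> 0"
    and I: "open I" "is_interval I" "I \<noteq> {}"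
    and J: "open J" "is_interval J" "J \<noteq> {}"
    and smooth: "smooth_on I c" "smooth_on I r" "smooth_on I e1" "smooth_on I e2"
    and circles: "\<forall>s\<in>I. r s > 0 \<and> norm (e1 s) = 1 \<and> norm (e2 s) = 1 \<and> e1 s \<bullet> e2 s = 0"
    and regular: "\<forall>s\<in>I. \<forall>t\<in>J.
        cross3 (Xs (cyclic_param c r e1 e2) s t) (Xt (cyclic_param c r e1 e2) s t) \<noteq> 0"
    and phi_minimal: "\<forall>s\<in>I. \<forall>t\<in>J.
        mean_curv (cyclic_param c r e1 e2) s t
          = 1/2 * (unit_normal (cyclic_param c r e1 e2) s t \<bullet> vector [\<alpha>, \<beta>, \<gamma>])"
  shows "\<forall>s1\<in>I. \<forall>s2\<in>I. cross3 (cross3 (e1 s1) (e2 s1)) (cross3 (e1 s2) (e2 s2)) = 0"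
proof -
  obtain c1 c2 where c1: "\<forall>x\<in>I. (c has_vector_derivative c1 x) (at x)"
    and c2: "\<forall>x\<in>I. (c1 has_vector_derivative c2 x) (at x)"
    using smooth_on_D2[OF smooth(1) I(1)] by blast
  obtain rr1 rr2 where r1: "\<forall>x\<in>I. (r has_vector_derivative rr1 x) (at x)"
    and r2: "\<forall>x\<in>I. (rr1 has_vector_derivative rr2 x) (at x)"
    using smooth_on_D2[OF smooth(2) I(1)] by blast
  obtain e11 e12 where e11: "\<forall>x\<in>I. (e1 has_vector_derivative e11 x) (at x)"
    and e12: "\<forall>x\<in>I. (e11 has_vector_derivative e12 x) (at x)"
    using smooth_on_D2[OF smooth(3) I(1)] by blast
  obtain e21 e22 where e21: "\<forall>x\<in>I. (e2 has_vector_derivative e21 x) (at x)"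
    and e22: "\<forall>x\<in>I. (e21 has_vector_derivative e22 x) (at x)"
    using smooth_on_D2[OF smooth(4) I(1)] by blast
  have r1R: "(r has_real_derivative rr1 x) (at x)" if "x \<in> I" for x
    using r1 that by (simp add: has_real_derivative_iff_has_vector_derivative)
  define n where "n = (\<lambda>s. cross3 (e1 s) (e2 s))"
  define vv where "vv = (vector [\<alpha>, \<beta>, \<gamma>] :: real^3)"
  define X where "X = cyclic_param c r e1 e2"
  have Xdef: "X s t = c s + r s *\<^sub>R (cos t *\<^sub>R e1 s + sin t *\<^sub>R e2 s)" for s t
    unfolding X_def cyclic_param_def by simp

  have XsF: "Xs X s t = c1 s + rr1 s *\<^sub>R (cos t *\<^sub>R e1 s + sin t *\<^sub>R e2 s)
                + r s *\<^sub>R (cos t *\<^sub>R e11 s + sin t *\<^sub>R e21 s)" if s: "s \<in> I" for s t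
  proof -
    have "((\<lambda>\<sigma>. X \<sigma> t) has_vector_derivative (c1 s + rr1 s *\<^sub>R (cos t *\<^sub>R e1 s + sin t *\<^sub>R e2 s)
                + r s *\<^sub>R (cos t *\<^sub>R e11 s + sin t *\<^sub>R e21 s))) (at s)"
      unfolding Xdef by (rule deriv_comb) (use c1 r1 e11 e21 s in auto)
    then show ?thesis unfolding Xs_def by (rule vector_derivative_at)
  qed
  have XssF: "Xs (Xs X) s t = (c2 s + rr2 s *\<^sub>R (cos t *\<^sub>R e1 s + sin t *\<^sub>R e2 s)
                + rr1 s *\<^sub>R (cos t *\<^sub>R e11 s + sin t *\<^sub>R e21 s))
                + rr1 s *\<^sub>R (cos t *\<^sub>R e11 s + sin t *\<^sub>R e21 s)
                + r s *\<^sub>R (cos t *\<^sub>R e12 s + sin t *\<^sub>R e22 s)" if s: "s \<in> I" for s t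
  proof -
    have inner: "((\<lambda>\<sigma>. c1 \<sigma> + rr1 \<sigma> *\<^sub>R (cos t *\<^sub>R e1 \<sigma> + sin t *\<^sub>R e2 \<sigma>)) has_vector_derivative
        (c2 s + rr2 s *\<^sub>R (cos t *\<^sub>R e1 s + sin t *\<^sub>R e2 s)
                + rr1 s *\<^sub>R (cos t *\<^sub>R e11 s + sin t *\<^sub>R e21 s))) (at s)"
      by (rule deriv_comb) (use c2 r2 e11 e21 s in auto)
    have "((\<lambda>\<sigma>. (c1 \<sigma> + rr1 \<sigma> *\<^sub>R (cos t *\<^sub>R e1 \<sigma> + sin t *\<^sub>R e2 \<sigma>))
              + r \<sigma> *\<^sub>R (cos t *\<^sub>R e11 \<sigma> + sin t *\<^sub>R e21 \<sigma>)) has_vector_derivative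
        ((c2 s + rr2 s *\<^sub>R (cos t *\<^sub>R e1 s + sin t *\<^sub>R e2 s)
                + rr1 s *\<^sub>R (cos t *\<^sub>R e11 s + sin t *\<^sub>R e21 s))
                + rr1 s *\<^sub>R (cos t *\<^sub>R e11 s + sin t *\<^sub>R e21 s)
                + r s *\<^sub>R (cos t *\<^sub>R e12 s + sin t *\<^sub>R e22 s))) (at s)"
      by (rule deriv_comb[OF inner]) (use r1 e12 e22 s in auto)
    then have "((\<lambda>\<sigma>. Xs X \<sigma> t) has_vector_derivative
        ((c2 s + rr2 s *\<^sub>R (cos t *\<^sub>R e1 s + sin t *\<^sub>R e2 s)
                + rr1 s *\<^sub>R (cos t *\<^sub>R e11 s + sin t *\<^sub>R e21 s))
                + rr1 s *\<^sub>R (cos t *\<^sub>R e11 s + sin t *\<^sub>R e21 s)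
                + r s *\<^sub>R (cos t *\<^sub>R e12 s + sin t *\<^sub>R e22 s))) (at s)"
      by (rule has_vector_derivative_transform_within_open[OF _ I(1) s]) (simp add: XsF)
    then show ?thesis unfolding Xs_def[of "Xs X"] by (rule vector_derivative_at)
  qed
  have XtF: "Xt X s t = r s *\<^sub>R (cos t *\<^sub>R e2 s + sin t *\<^sub>R (- e1 s))" for s t
  proof -
    have "((\<lambda>\<tau>. X s \<tau>) has_vector_derivative r s *\<^sub>R (cos t *\<^sub>R e2 s + sin t *\<^sub>R (- e1 s))) (at t)"
      unfolding Xdef by (rule deriv_t)
    then show ?thesis unfolding Xt_def by (rule vector_derivative_at)
  qed
  have XttF: "Xt (Xt X) s t = r s *\<^sub>R (cos t *\<^sub>R (- e1 s) + sin t *\<^sub>R (- e2 s))" for s t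
  proof -
    have "((\<lambda>\<tau>. 0 + r s *\<^sub>R (cos \<tau> *\<^sub>R e2 s + sin \<tau> *\<^sub>R (- e1 s))) has_vector_derivative
            r s *\<^sub>R (cos t *\<^sub>R (- e1 s) + sin t *\<^sub>R (- (e2 s)))) (at t)"
      by (rule deriv_t)
    then have "((\<lambda>\<tau>. Xt X s \<tau>) has_vector_derivative
            r s *\<^sub>R (cos t *\<^sub>R (- e1 s) + sin t *\<^sub>R (- (e2 s)))) (at t)"
      unfolding XtF by simp
    then show ?thesis unfolding Xt_def[of "Xt X"] by (rule vector_derivative_at)
  qed
  have XstF: "Xt (Xs X) s t = 1 *\<^sub>R (cos t *\<^sub>R (rr1 s *\<^sub>R e2 s + r s *\<^sub>R e21 s)
                 + sin t *\<^sub>R (- (rr1 s *\<^sub>R e1 s + r s *\<^sub>R e11 s)))" if s: "s \<in> I" for s t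
  proof -
    have eq: "Xs X s \<tau> = c1 s + 1 *\<^sub>R (cos \<tau> *\<^sub>R (rr1 s *\<^sub>R e1 s + r s *\<^sub>R e11 s)
                 + sin \<tau> *\<^sub>R (rr1 s *\<^sub>R e2 s + r s *\<^sub>R e21 s))" for \<tau>
      unfolding XsF[OF s] by (simp add: algebra_simps)
    have "((\<lambda>\<tau>. Xs X s \<tau>) has_vector_derivative 1 *\<^sub>R (cos t *\<^sub>R (rr1 s *\<^sub>R e2 s + r s *\<^sub>R e21 s)
                 + sin t *\<^sub>R (- (rr1 s *\<^sub>R e1 s + r s *\<^sub>R e11 s)))) (at t)"
      unfolding eq by (rule deriv_t)
    then show ?thesis unfolding Xt_def[of "Xs X"] by (rule vector_derivative_at)
  qed

  have on1: "e1 s \<bullet> e1 s = 1" and on2: "e2 s \<bullet> e2 s = 1" and on3: "e1 s \<bullet> e2 s = 0" if "s \<in> I" for s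
    using circles that by (auto simp: dot_square_norm)
  have o1: "e1 s \<bullet> e11 s = 0" if s: "s \<in> I" for s
  proof -
    have "e1 s \<bullet> e11 s + e11 s \<bullet> e1 s = 0"
      by (rule deriv_const_zero[OF I(1) s, of "\<lambda>s. e1 s \<bullet> e1 s" 1]) (use on1 e11 s in \<open>auto intro: deriv_inner\<close>)
    then show ?thesis by (simp add: inner_commute)
  qed
  have o2: "e2 s \<bullet> e21 s = 0" if s: "s \<in> I" for s
  proof -
    have "e2 s \<bullet> e21 s + e21 s \<bullet> e2 s = 0"
      by (rule deriv_const_zero[OF I(1) s, of "\<lambda>s. e2 s \<bullet> e2 s" 1]) (use on2 e21 s in \<open>auto intro: deriv_inner\<close>)
    then show ?thesis by (simp add: inner_commute)
  qed
  have o3: "e1 s \<bullet> e21 s + e11 s \<bullet> e2 s = 0" if s: "s \<in> I" for s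
    by (rule deriv_const_zero[OF I(1) s, of "\<lambda>s. e1 s \<bullet> e2 s" 0]) (use on3 e11 e21 s in \<open>auto intro: deriv_inner\<close>)
  have o4: "e1 s \<bullet> e12 s + e11 s \<bullet> e11 s = 0" if s: "s \<in> I" for s
    by (rule deriv_const_zero[OF I(1) s, of "\<lambda>s. e1 s \<bullet> e11 s" 0]) (use o1 e11 e12 s in \<open>auto intro: deriv_inner\<close>)
  have o5: "e2 s \<bullet> e22 s + e21 s \<bullet> e21 s = 0" if s: "s \<in> I" for s
    by (rule deriv_const_zero[OF I(1) s, of "\<lambda>s. e2 s \<bullet> e21 s" 0]) (use o2 e21 e22 s in \<open>auto intro: deriv_inner\<close>)
  have o6: "(e1 s \<bullet> e22 s + e11 s \<bullet> e21 s) + (e11 s \<bullet> e21 s + e12 s \<bullet> e2 s) = 0" if s: "s \<in> I" for s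
  proof -
    have "((\<lambda>s. e1 s \<bullet> e21 s + e11 s \<bullet> e2 s) has_real_derivative
           ((e1 s \<bullet> e22 s + e11 s \<bullet> e21 s) + (e11 s \<bullet> e21 s + e12 s \<bullet> e2 s))) (at s)"
      by (rule DERIV_add; rule deriv_inner) (use e11 e12 e21 e22 s in auto)
    then show ?thesis by (rule deriv_const_zero[OF I(1) s, rotated]) (use o3 in auto)
  qed
  have nperp: "n s \<bullet> e1 s = 0" "n s \<bullet> e2 s = 0" for s unfolding n_def by (simp_all add: dot_cross_self)
  have nn: "n s \<bullet> n s = 1" if s: "s \<in> I" for s
  proof -
    have "(norm (n s))^2 + (e1 s \<bullet> e2 s)^2 = (norm (e1 s) * norm (e2 s))^2" unfolding n_def by (rule norm_cross_dot)
    then show ?thesis using circles s by (simp add: dot_square_norm)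
  qed

  define kap where "kap s x = (vector [e1 s \<bullet> x, e2 s \<bullet> x, n s \<bullet> x] :: real^3)" for s x
  have kdot: "kap s x \<bullet> kap s y = x \<bullet> y" if s: "s \<in> I" for s x y
    using frame(1)[of "e1 s" "e2 s" x y] circles s unfolding kap_def n_def by auto
  have kcross: "kap s (cross3 x y) = cross3 (kap s x) (kap s y)" if s: "s \<in> I" for s x y
    using frame(2)[of "e1 s" "e2 s" x y] circles s unfolding kap_def n_def by auto
  have kadd: "kap s (x + y) = kap s x + kap s y" for s x y
    unfolding kap_def by (simp add: v3_add inner_add_right)
  have kscale: "kap s (k *\<^sub>R x) = k *\<^sub>R kap s x" for s k x
    unfolding kap_def by (simp add: v3_scale)
  have kneg: "kap s (- x) = - kap s x" for s x
    unfolding kap_def by (simp add: v3_neg)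
  define pp where "pp s = e1 s \<bullet> c1 s" for s
  define qq where "qq s = e2 s \<bullet> c1 s" for s
  define mm where "mm s = n s \<bullet> c1 s" for s
  define pp2 where "pp2 s = e1 s \<bullet> c2 s" for s
  define qq2 where "qq2 s = e2 s \<bullet> c2 s" for s
  define mm2 where "mm2 s = n s \<bullet> c2 s" for s
  define aa where "aa s = e2 s \<bullet> e11 s" for s
  define bb where "bb s = n s \<bullet> e11 s" for s
  define dd where "dd s = n s \<bullet> e21 s" for s
  define y21 where "y21 s = e1 s \<bullet> e22 s" for s
  define y1n where "y1n s = n s \<bullet> e12 s" for s
  define y2n where "y2n s = n s \<bullet> e22 s" for s
  define w1 where "w1 s = e1 s \<bullet> vv" for s
  define w2 where "w2 s = e2 s \<bullet> vv" for s
  define wn where "wn s = n s \<bullet> vv" for s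
  have ke1: "kap s (e1 s) = vector [1, 0, 0]" if s: "s \<in> I" for s
    unfolding kap_def using on1[OF s] on3[OF s] nperp by (simp add: inner_commute)
  have ke2: "kap s (e2 s) = vector [0, 1, 0]" if s: "s \<in> I" for s
    unfolding kap_def using on2[OF s] on3[OF s] nperp by (simp add: inner_commute)
  have kn: "kap s (n s) = vector [0, 0, 1]" if s: "s \<in> I" for s
    unfolding kap_def using nn[OF s] nperp by (simp add: inner_commute)
  have ke11: "kap s (e11 s) = vector [0, aa s, bb s]" if s: "s \<in> I" for s
    unfolding kap_def aa_def bb_def using o1[OF s] by simp
  have ke21: "kap s (e21 s) = vector [- aa s, 0, dd s]" if s: "s \<in> I" for s
  proof -
    have "e1 s \<bullet> e21 s = - (e2 s \<bullet> e11 s)" using o3[OF s] by (simp add: inner_commute eq_neg_iff_add_eq_0)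
    then show ?thesis unfolding kap_def aa_def dd_def using o2[OF s] by simp
  qed
  have e11sq: "e11 s \<bullet> e11 s = aa s ^ 2 + bb s ^ 2" if s: "s \<in> I" for s
    using kdot[OF s, of "e11 s" "e11 s"] unfolding ke11[OF s] by (simp add: vec3_inner power2_eq_square)
  have e1121: "e11 s \<bullet> e21 s = bb s * dd s" if s: "s \<in> I" for s
    using kdot[OF s, of "e11 s" "e21 s"] unfolding ke11[OF s] ke21[OF s] by (simp add: vec3_inner)
  have e21sq: "e21 s \<bullet> e21 s = aa s ^ 2 + dd s ^ 2" if s: "s \<in> I" for s
    using kdot[OF s, of "e21 s" "e21 s"] unfolding ke21[OF s] by (simp add: vec3_inner power2_eq_square)
  have ke12: "kap s (e12 s) = vector [0 - (aa s ^ 2 + bb s ^ 2), 0 - 2 * bb s * dd s - y21 s, y1n s]" if s: "s \<in> I" for s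
  proof -
    have "e1 s \<bullet> e12 s = 0 - (aa s ^ 2 + bb s ^ 2)" using o4[OF s] e11sq[OF s] by simp
    moreover have "e2 s \<bullet> e12 s = 0 - 2 * bb s * dd s - y21 s"
      using o6[OF s] e1121[OF s] unfolding y21_def by (simp add: inner_commute algebra_simps)
    ultimately show ?thesis unfolding kap_def y1n_def by simp
  qed
  have ke22: "kap s (e22 s) = vector [y21 s, 0 - (aa s ^ 2 + dd s ^ 2), y2n s]" if s: "s \<in> I" for s
  proof -
    have "e2 s \<bullet> e22 s = 0 - (aa s ^ 2 + dd s ^ 2)" using o5[OF s] e21sq[OF s] by simp
    then show ?thesis unfolding kap_def y21_def y2n_def by simp
  qed
  have kc1: "kap s (c1 s) = vector [pp s, qq s, mm s]" for s unfolding kap_def pp_def qq_def mm_def by simp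
  have kc2: "kap s (c2 s) = vector [pp2 s, qq2 s, mm2 s]" for s unfolding kap_def pp2_def qq2_def mm2_def by simp
  have kvv: "kap s vv = vector [w1 s, w2 s, wn s]" for s unfolding kap_def w1_def w2_def wn_def by simp

  (* ---------- the phi-minimal equation as a trigonometric polynomial ---------- *)
  have coef: "alphaC (r s) (rr1 s) (rr2 s) (pp s) (qq s) (mm s) (pp2 s) (qq2 s) (mm2 s) (aa s) (bb s) (dd s)
                 (y21 s) (y1n s) (y2n s) (w1 s) (w2 s) (wn s) k = 0 \<and>
              betaC (r s) (rr1 s) (rr2 s) (pp s) (qq s) (mm s) (pp2 s) (qq2 s) (mm2 s) (aa s) (bb s) (dd s)
                 (y21 s) (y1n s) (y2n s) (w1 s) (w2 s) (wn s) k = 0"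
    if s: "s \<in> I" and k: "k \<le> 4" for s k
  proof -
    have "\<forall>t\<in>J. (\<Sum>k\<le>4. (alphaC (r s) (rr1 s) (rr2 s) (pp s) (qq s) (mm s) (pp2 s) (qq2 s) (mm2 s) (aa s) (bb s) (dd s)
                 (y21 s) (y1n s) (y2n s) (w1 s) (w2 s) (wn s) k
           + betaC (r s) (rr1 s) (rr2 s) (pp s) (qq s) (mm s) (pp2 s) (qq2 s) (mm2 s) (aa s) (bb s) (dd s)
                 (y21 s) (y1n s) (y2n s) (w1 s) (w2 s) (wn s) k * sin t) * cos t ^ k) = 0"
    proof
      fix t assume t: "t \<in> J"
      let ?Xu = "Xs X s t" and ?Xv = "Xt X s t" and ?Xuu = "Xs (Xs X) s t"
        and ?Xuv = "Xt (Xs X) s t" and ?Xvv = "Xt (Xt X) s t"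
      have reg: "cross3 ?Xu ?Xv \<noteq> 0" using regular s t unfolding X_def by blast
      have H: "((?Xuu \<bullet> unit_normal X s t) * (?Xv \<bullet> ?Xv) - 2 * (?Xuv \<bullet> unit_normal X s t) * (?Xu \<bullet> ?Xv)
              + (?Xvv \<bullet> unit_normal X s t) * (?Xu \<bullet> ?Xu))
             / (2 * ((?Xu \<bullet> ?Xu) * (?Xv \<bullet> ?Xv) - (?Xu \<bullet> ?Xv)^2)) = 1/2 * (unit_normal X s t \<bullet> vv)"
        using phi_minimal s t unfolding X_def[symmetric] vv_def[symmetric] mean_curv_def Let_def by simp
      have eq0: "(?Xuu \<bullet> cross3 ?Xu ?Xv) * (?Xv \<bullet> ?Xv) - 2 * (?Xuv \<bullet> cross3 ?Xu ?Xv) * (?Xu \<bullet> ?Xv)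
         + (?Xvv \<bullet> cross3 ?Xu ?Xv) * (?Xu \<bullet> ?Xu)
         - (cross3 ?Xu ?Xv \<bullet> cross3 ?Xu ?Xv) * (cross3 ?Xu ?Xv \<bullet> vv) = 0"
        by (rule mc_lemma[OF reg _ H]) (simp add: unit_normal_def)
      have eq1: "(kap s ?Xuu \<bullet> cross3 (kap s ?Xu) (kap s ?Xv)) * (kap s ?Xv \<bullet> kap s ?Xv)
         - 2 * (kap s ?Xuv \<bullet> cross3 (kap s ?Xu) (kap s ?Xv)) * (kap s ?Xu \<bullet> kap s ?Xv)
         + (kap s ?Xvv \<bullet> cross3 (kap s ?Xu) (kap s ?Xv)) * (kap s ?Xu \<bullet> kap s ?Xu)
         - (cross3 (kap s ?Xu) (kap s ?Xv) \<bullet> cross3 (kap s ?Xu) (kap s ?Xv))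
            * (cross3 (kap s ?Xu) (kap s ?Xv) \<bullet> kap s vv) = 0"
        using eq0 by (simp only: kcross[OF s, symmetric] kdot[OF s])
      have KXt: "kap s ?Xv = vector [- r s * sin t, r s * cos t, 0]"
        unfolding XtF kscale kadd kneg ke1[OF s] ke2[OF s] v3_scale v3_add v3_neg v3_eq by simp
      have KXtt: "kap s ?Xvv = vector [- r s * cos t, -r s * sin t, 0]"
        unfolding XttF kscale kadd kneg ke1[OF s] ke2[OF s] v3_scale v3_add v3_neg v3_eq by simp
      have KXs: "kap s ?Xu = vector [pp s + rr1 s * cos t - r s * aa s * sin t, qq s + rr1 s * sin t + r s * aa s * cos t,
                     mm s + r s * (bb s * cos t + dd s * sin t)]"
        unfolding XsF[OF s] kscale kadd kneg ke1[OF s] ke2[OF s] ke11[OF s] ke21[OF s] kc1 v3_scale v3_add v3_neg v3_eq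
        by (simp add: algebra_simps)
      have KXst: "kap s ?Xuv = vector [- rr1 s * sin t - r s * aa s * cos t, rr1 s * cos t - r s * aa s * sin t,
                     r s * (dd s * cos t - bb s * sin t)]"
        unfolding XstF[OF s] kscale kadd kneg ke1[OF s] ke2[OF s] ke11[OF s] ke21[OF s] v3_scale v3_add v3_neg v3_eq
        by (simp add: algebra_simps)
      have KXss: "kap s ?Xuu = vector [pp2 s + rr2 s * cos t - 2 * rr1 s * aa s * sin t
                        + r s * ((0 - (aa s ^ 2 + bb s ^ 2)) * cos t + sin t * y21 s),
                     qq2 s + rr2 s * sin t + 2 * rr1 s * aa s * cos t
                        + r s * ((0 - 2 * bb s * dd s - y21 s) * cos t + (0 - (aa s ^ 2 + dd s ^ 2)) * sin t),
                     mm2 s + 2 * rr1 s * (bb s * cos t + dd s * sin t) + r s * (cos t * y1n s + sin t * y2n s)]"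
        unfolding XssF[OF s] kscale kadd kneg ke1[OF s] ke2[OF s] ke11[OF s] ke21[OF s] ke12[OF s] ke22[OF s]
          kc2 v3_scale v3_add v3_neg v3_eq
        by (simp add: algebra_simps)
      have cs: "(cos t)^2 + (sin t)^2 = 1" by simp
      show "(\<Sum>k\<le>4. (alphaC (r s) (rr1 s) (rr2 s) (pp s) (qq s) (mm s) (pp2 s) (qq2 s) (mm2 s) (aa s) (bb s) (dd s)
                 (y21 s) (y1n s) (y2n s) (w1 s) (w2 s) (wn s) k
           + betaC (r s) (rr1 s) (rr2 s) (pp s) (qq s) (mm s) (pp2 s) (qq2 s) (mm2 s) (aa s) (bb s) (dd s)
                 (y21 s) (y1n s) (y2n s) (w1 s) (w2 s) (wn s) k * sin t) * cos t ^ k) = 0"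
        using phi_coeffs[OF cs KXt KXtt KXs KXst KXss refl, of "w1 s" "w2 s" "wn s"] eq1
        unfolding kvv by simp
    qed
    from trig_poly_zero[OF J(1) J(3) this] k show ?thesis by blast
  qed
  define nD where "nD s = cross3 (e1 s) (e21 s) + cross3 (e11 s) (e2 s)" for s
  have dn: "(n has_vector_derivative nD s) (at s)" if s: "s \<in> I" for s
    unfolding n_def nD_def by (rule deriv_cross) (use e11 e21 s in auto)
  have knD: "kap s (nD s) = vector [- bb s, - dd s, 0]" if s: "s \<in> I" for s
    unfolding nD_def kadd kcross[OF s] ke1[OF s] ke2[OF s] ke11[OF s] ke21[OF s] vec3_cross v3_add v3_eq by simp
  have dpp: "(pp has_real_derivative (e1 s \<bullet> c2 s + e11 s \<bullet> c1 s)) (at s)" if s: "s \<in> I" for s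
    unfolding pp_def by (rule deriv_inner) (use e11 c1 c2 s in auto)
  have dqq: "(qq has_real_derivative (e2 s \<bullet> c2 s + e21 s \<bullet> c1 s)) (at s)" if s: "s \<in> I" for s
    unfolding qq_def by (rule deriv_inner) (use e21 c1 c2 s in auto)
  have dbb: "(bb has_real_derivative (n s \<bullet> e12 s + nD s \<bullet> e11 s)) (at s)" if s: "s \<in> I" for s
    unfolding bb_def by (rule deriv_inner) (use dn e12 s in auto)
  have ddd: "(dd has_real_derivative (n s \<bullet> e22 s + nD s \<bullet> e21 s)) (at s)" if s: "s \<in> I" for s
    unfolding dd_def by (rule deriv_inner) (use dn e22 s in auto)
  have dw1: "(w1 has_real_derivative (e1 s \<bullet> 0 + e11 s \<bullet> vv)) (at s)" if s: "s \<in> I" for s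
    unfolding w1_def by (rule deriv_inner) (use e11 s in auto)
  have dw2: "(w2 has_real_derivative (e2 s \<bullet> 0 + e21 s \<bullet> vv)) (at s)" if s: "s \<in> I" for s
    unfolding w2_def by (rule deriv_inner) (use e21 s in auto)
  have Pv: "e1 s \<bullet> c2 s + e11 s \<bullet> c1 s = pp2 s + aa s * qq s + bb s * mm s" if s: "s \<in> I" for s
    using kdot[OF s, of "e11 s" "c1 s"] unfolding ke11[OF s] kc1 vec3_inner pp2_def by simp
  have Qv: "e2 s \<bullet> c2 s + e21 s \<bullet> c1 s = qq2 s - aa s * pp s + dd s * mm s" if s: "s \<in> I" for s
    using kdot[OF s, of "e21 s" "c1 s"] unfolding ke21[OF s] kc1 vec3_inner qq2_def by simp
  have Bv: "n s \<bullet> e12 s + nD s \<bullet> e11 s = y1n s - aa s * dd s" if s: "s \<in> I" for s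
    using kdot[OF s, of "nD s" "e11 s"] unfolding ke11[OF s] knD[OF s] vec3_inner y1n_def by (simp add: algebra_simps)
  have Dv: "n s \<bullet> e22 s + nD s \<bullet> e21 s = y2n s + aa s * bb s" if s: "s \<in> I" for s
    using kdot[OF s, of "nD s" "e21 s"] unfolding ke21[OF s] knD[OF s] vec3_inner y2n_def by (simp add: algebra_simps)
  have W1v: "e1 s \<bullet> 0 + e11 s \<bullet> vv = aa s * w2 s + bb s * wn s" if s: "s \<in> I" for s
    using kdot[OF s, of "e11 s" vv] unfolding ke11[OF s] kvv vec3_inner by simp
  have W2v: "e2 s \<bullet> 0 + e21 s \<bullet> vv = - aa s * w1 s + dd s * wn s" if s: "s \<in> I" for s
    using kdot[OF s, of "e21 s" vv] unfolding ke21[OF s] kvv vec3_inner by simp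
  have contI: "continuous_on I f" if "\<And>s. s \<in> I \<Longrightarrow> (f has_real_derivative f' s) (at s)" for f :: "real \<Rightarrow> real" and f'
    using that by (intro continuous_at_imp_continuous_on) (blast intro: DERIV_isCont)
  have cbb: "continuous_on I bb" by (rule contI) (erule dbb)
  have cdd: "continuous_on I dd" by (rule contI) (erule ddd)
  have cw1: "continuous_on I w1" by (rule contI) (erule dw1)
  have cw2: "continuous_on I w2" by (rule contI) (erule dw2)
  have vvnz: "vv \<noteq> 0" using not_all_zero unfolding vv_def v3_zero by blast

  (* ---------- main argument: the normal of the planes is constant ---------- *)
  have bd0: "bb s = 0 \<and> dd s = 0" if s: "s \<in> I" for s
  proof (rule ccontr)
    assume nz: "\<not> (bb s = 0 \<and> dd s = 0)"
    define U0 where "U0 = I \<inter> (\<lambda>s. bb s ^ 2 + dd s ^ 2) -` {0<..}"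
    have oU0: "open U0" unfolding U0_def
      by (rule continuous_open_preimage[OF _ I(1) open_greaterThan]) (intro continuous_intros cbb cdd)
    have sU0: "s \<in> U0" unfolding U0_def using s nz by (simp add: sum_power2_gt_zero_iff)
    have U0I: "U0 \<subseteq> I" unfolding U0_def by blast
    show False
    proof (cases "\<forall>\<sigma>\<in>U0. w1 \<sigma> = 0 \<and> w2 \<sigma> = 0")
      case True
      have "e1 s \<bullet> 0 + e11 s \<bullet> vv = 0"
        by (rule deriv_const_zero[OF oU0 sU0 _ dw1[OF s], of 0]) (use True in auto)
      then have b0: "bb s * wn s = 0" using W1v[OF s] True sU0 by simp
      have "e2 s \<bullet> 0 + e21 s \<bullet> vv = 0"
        by (rule deriv_const_zero[OF oU0 sU0 _ dw2[OF s], of 0]) (use True in auto)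
      then have d0: "dd s * wn s = 0" using W2v[OF s] True sU0 by simp
      have "vv \<bullet> vv = w1 s ^ 2 + w2 s ^ 2 + wn s ^ 2"
        using kdot[OF s, of vv vv] unfolding kvv vec3_inner by (simp add: power2_eq_square)
      then have "vv \<bullet> vv = wn s ^ 2" using True sU0 by simp
      then have "wn s \<noteq> 0" using vvnz by auto
      then show False using b0 d0 nz by simp
    next
      case False
      then obtain s1 where s1U0: "s1 \<in> U0" and s1w: "\<not> (w1 s1 = 0 \<and> w2 s1 = 0)" by blast
      define U1 where "U1 = U0 \<inter> (\<lambda>s. w1 s ^ 2 + w2 s ^ 2) -` {0<..}"
      have oU1: "open U1" unfolding U1_def
        by (rule continuous_open_preimage[OF _ oU0 open_greaterThan])
           (intro continuous_intros continuous_on_subset[OF cw1 U0I] continuous_on_subset[OF cw2 U0I])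
      have s1U1: "s1 \<in> U1" unfolding U1_def using s1U0 s1w by (simp add: sum_power2_gt_zero_iff)
      have U1I: "U1 \<subseteq> I" using U0I unfolding U1_def by blast
      have F: "pp \<sigma> * bb \<sigma> + qq \<sigma> * dd \<sigma> = 0 \<and> pp \<sigma> ^ 2 + qq \<sigma> ^ 2 = r \<sigma> ^ 2 * (bb \<sigma> ^ 2 + dd \<sigma> ^ 2)"
        if \<sigma>: "\<sigma> \<in> U1" for \<sigma>
      proof -
        have \<sigma>I: "\<sigma> \<in> I" using \<sigma> U1I by blast
        show ?thesis
          by (rule alg_D4[where r="r \<sigma>" and ?r1.0="rr1 \<sigma>" and ?r2.0="rr2 \<sigma>" and p="pp \<sigma>" and q="qq \<sigma>" and m="mm \<sigma>" and ?p2.0="pp2 \<sigma>" and ?q2.0="qq2 \<sigma>" and ?m2.0="mm2 \<sigma>" and a="aa \<sigma>" and b="bb \<sigma>" and d="dd \<sigma>" and ?x21.0="y21 \<sigma>" and x1n="y1n \<sigma>" and x2n="y2n \<sigma>" and ?v1.0="w1 \<sigma>" and ?v2.0="w2 \<sigma>" and vn="wn \<sigma>"]) (use circles \<sigma>I \<sigma> coef[OF \<sigma>I, of 4] coef[OF \<sigma>I, of 3] in \<open>auto simp: U1_def U0_def\<close>)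
      qed
      have s1I: "s1 \<in> I" using s1U1 U1I by blast
      have rpos: "r s1 > 0" using circles s1I by blast
      have L1: "bb s1 ^ 2 + dd s1 ^ 2 > 0" using s1U0 unfolding U0_def by simp
      have V1: "w1 s1 ^ 2 + w2 s1 ^ 2 > 0" using s1U1 unfolding U1_def by simp
      obtain e where e: "e^2 = 1" "pp s1 = e * r s1 * dd s1" "qq s1 = - e * r s1 * bb s1"
        using alg_eps[OF rpos L1] F[OF s1U1] by blast
      have mr: "mm s1 = 0 \<and> rr1 s1 = 0"
        by (rule alg_D3[where r="r s1" and ?r1.0="rr1 s1" and ?r2.0="rr2 s1" and p="pp s1" and q="qq s1" and m="mm s1" and ?p2.0="pp2 s1" and ?q2.0="qq2 s1" and ?m2.0="mm2 s1" and a="aa s1" and b="bb s1" and d="dd s1" and ?x21.0="y21 s1" and x1n="y1n s1" and x2n="y2n s1" and ?v1.0="w1 s1" and ?v2.0="w2 s1" and vn="wn s1" and e=e, OF rpos L1 V1 e]) (use coef[OF s1I, of 3] coef[OF s1I, of 2] in auto)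
      have dF1: "((\<lambda>\<sigma>. pp \<sigma> * bb \<sigma> + qq \<sigma> * dd \<sigma>) has_real_derivative
          ((e1 s1 \<bullet> c2 s1 + e11 s1 \<bullet> c1 s1) * bb s1 + pp s1 * (n s1 \<bullet> e12 s1 + nD s1 \<bullet> e11 s1)
           + ((e2 s1 \<bullet> c2 s1 + e21 s1 \<bullet> c1 s1) * dd s1 + qq s1 * (n s1 \<bullet> e22 s1 + nD s1 \<bullet> e21 s1)))) (at s1)"
        by (rule DERIV_cong[OF DERIV_add[OF DERIV_mult[OF dpp[OF s1I] dbb[OF s1I]] DERIV_mult[OF dqq[OF s1I] ddd[OF s1I]]]]) (simp add: algebra_simps)
      have dF1z: "(e1 s1 \<bullet> c2 s1 + e11 s1 \<bullet> c1 s1) * bb s1 + pp s1 * (n s1 \<bullet> e12 s1 + nD s1 \<bullet> e11 s1)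
           + ((e2 s1 \<bullet> c2 s1 + e21 s1 \<bullet> c1 s1) * dd s1 + qq s1 * (n s1 \<bullet> e22 s1 + nD s1 \<bullet> e21 s1)) = 0"
        by (rule deriv_const_zero[OF oU1 s1U1 _ dF1, of 0]) (use F in auto)
      have dF2: "((\<lambda>\<sigma>. pp \<sigma> * pp \<sigma> + qq \<sigma> * qq \<sigma> - r \<sigma> * r \<sigma> * (bb \<sigma> * bb \<sigma> + dd \<sigma> * dd \<sigma>)) has_real_derivative
          ((e1 s1 \<bullet> c2 s1 + e11 s1 \<bullet> c1 s1) * pp s1 + pp s1 * (e1 s1 \<bullet> c2 s1 + e11 s1 \<bullet> c1 s1)
           + ((e2 s1 \<bullet> c2 s1 + e21 s1 \<bullet> c1 s1) * qq s1 + qq s1 * (e2 s1 \<bullet> c2 s1 + e21 s1 \<bullet> c1 s1))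
           - ((rr1 s1 * r s1 + r s1 * rr1 s1) * (bb s1 * bb s1 + dd s1 * dd s1)
              + r s1 * r s1 * (((n s1 \<bullet> e12 s1 + nD s1 \<bullet> e11 s1) * bb s1 + bb s1 * (n s1 \<bullet> e12 s1 + nD s1 \<bullet> e11 s1))
                + ((n s1 \<bullet> e22 s1 + nD s1 \<bullet> e21 s1) * dd s1 + dd s1 * (n s1 \<bullet> e22 s1 + nD s1 \<bullet> e21 s1)))))) (at s1)"
        by (rule DERIV_cong[OF DERIV_diff[OF DERIV_add[OF DERIV_mult[OF dpp[OF s1I] dpp[OF s1I]] DERIV_mult[OF dqq[OF s1I] dqq[OF s1I]]]
               DERIV_mult[OF DERIV_mult[OF r1R[OF s1I] r1R[OF s1I]] DERIV_add[OF DERIV_mult[OF dbb[OF s1I] dbb[OF s1I]] DERIV_mult[OF ddd[OF s1I] ddd[OF s1I]]]]]])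
           (simp add: algebra_simps)
      have dF2z: "(e1 s1 \<bullet> c2 s1 + e11 s1 \<bullet> c1 s1) * pp s1 + pp s1 * (e1 s1 \<bullet> c2 s1 + e11 s1 \<bullet> c1 s1)
           + ((e2 s1 \<bullet> c2 s1 + e21 s1 \<bullet> c1 s1) * qq s1 + qq s1 * (e2 s1 \<bullet> c2 s1 + e21 s1 \<bullet> c1 s1))
           - ((rr1 s1 * r s1 + r s1 * rr1 s1) * (bb s1 * bb s1 + dd s1 * dd s1)
              + r s1 * r s1 * (((n s1 \<bullet> e12 s1 + nD s1 \<bullet> e11 s1) * bb s1 + bb s1 * (n s1 \<bullet> e12 s1 + nD s1 \<bullet> e11 s1))
                + ((n s1 \<bullet> e22 s1 + nD s1 \<bullet> e21 s1) * dd s1 + dd s1 * (n s1 \<bullet> e22 s1 + nD s1 \<bullet> e21 s1)))) = 0"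
        by (rule deriv_const_zero[OF oU1 s1U1 _ dF2, of 0]) (use F in \<open>auto simp: power2_eq_square\<close>)
      have G1: "(pp2 s1 + aa s1 * qq s1 + bb s1 * mm s1) * bb s1 + pp s1 * (y1n s1 - aa s1 * dd s1)
          + (qq2 s1 - aa s1 * pp s1 + dd s1 * mm s1) * dd s1 + qq s1 * (y2n s1 + aa s1 * bb s1) = 0"
        using dF1z unfolding Pv[OF s1I] Qv[OF s1I] Bv[OF s1I] Dv[OF s1I] by (simp add: algebra_simps)
      have G2: "2 * pp s1 * (pp2 s1 + aa s1 * qq s1 + bb s1 * mm s1) + 2 * qq s1 * (qq2 s1 - aa s1 * pp s1 + dd s1 * mm s1)
          - 2 * r s1 * rr1 s1 * (bb s1 ^ 2 + dd s1 ^ 2)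
          - r s1 ^ 2 * (2 * bb s1 * (y1n s1 - aa s1 * dd s1) + 2 * dd s1 * (y2n s1 + aa s1 * bb s1)) = 0"
        using dF2z unfolding Pv[OF s1I] Qv[OF s1I] Bv[OF s1I] Dv[OF s1I] by (simp add: algebra_simps power2_eq_square)
      have "w1 s1 = 0 \<and> w2 s1 = 0"
        by (rule alg_D2[where r="r s1" and ?r1.0="rr1 s1" and ?r2.0="rr2 s1" and p="pp s1" and q="qq s1" and m="mm s1" and ?p2.0="pp2 s1" and ?q2.0="qq2 s1" and ?m2.0="mm2 s1" and a="aa s1" and b="bb s1" and d="dd s1" and ?x21.0="y21 s1" and x1n="y1n s1" and x2n="y2n s1" and ?v1.0="w1 s1" and ?v2.0="w2 s1" and vn="wn s1" and e=e, OF rpos L1 e _ _ _ _ G1 G2]) (use mr coef[OF s1I, of 2] coef[OF s1I, of 1] in auto)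
      then show False using s1w by blast
    qed
  qed
  have nD0: "(n has_vector_derivative 0) (at s within I)" if s: "s \<in> I" for s
  proof -
    have "kap s (nD s) = 0" unfolding knD[OF s] v3_zero using bd0[OF s] by simp
    then have "nD s \<bullet> nD s = 0" using kdot[OF s, of "nD s" "nD s"] by simp
    then have "nD s = 0" by simp
    then show ?thesis using dn[OF s] by (metis has_vector_derivative_at_within)
  qed
  obtain C where C: "\<And>x. x \<in> I \<Longrightarrow> n x = C"
    using has_vector_derivative_zero_constant[OF is_interval_convex[OF I(2)] nD0] by blast
  show ?thesis
  proof (intro ballI)
    fix s1 s2 assume "s1 \<in> I" "s2 \<in> I"
    then have "n s1 = n s2" using C by simp
    then show "cross3 (cross3 (e1 s1) (e2 s1)) (cross3 (e1 s2) (e2 s2)) = 0" unfolding n_def by simp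
  qed
qed

end
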